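(* Let $\nu$ be a probability measure on $\Omega$ such that $I_\Lambda(\nu)=0$ for every finite set $\Lambda$ of edges of $\mathcal H$. Then $\nu$ is a Gibbs measure.
   Context: $\mathcal T$ is the triangular lattice on $\mathbb Z^2$ ($u\sim u\pm\hat e_i$, $\hat e_1=(1,0)$, $\hat e_2=(0,1)$, $\hat e_3=(-1,-1)$; $\hat e_3$ vertical), $\mathcal H$ its dual honeycomb lattice with edge set $\mathcal E$ (vertices of $\mathcal T$ are hexagonal faces of $\mathcal H$); $b_i(u)$ is the edge of $\mathcal H$ crossed by the $\mathcal T$-edge from $u$ to $u+\hat e_i$; type-3 (horizontal) dimers are "particles". $\Omega$ is the set of perfect matchings (dimer coverings) of $\mathcal H$ with the product topology and Borel $\sigma$-algebra. A probability measure $\lambda$ on $\Omega$ is a Gibbs measure if for every finite $\Lambda\subset\mathcal E$ and $\lambda$-a.e. configuration outside $\Lambda$, the conditional law of the configuration on $\Lambda$ is uniform on the finitely many configurations on $\Lambda$ compatible with it. Particle jumps: a particle at $b_3(v)$ moved by $+n\hat e_3$ goes to $b_3(v+n\hat e_3)$ crossing faces $v+k\hat e_3$, $k=1..n$; moved by $-n\hat e_3$ goes to $b_3(v-n\hat e_3)$ crossing faces $v-k\hat e_3$, $k=0..n-1$; the jump consists of successively performing, at the $n$ crossed faces, elementary rotations (replacing three alternate occupied edges of a hexagonal face by the other three), each being legal when performed. For finite $\Lambda\subset\mathcal E$, $\partial\Lambda$ is the set of edges not in $\Lambda$ sharing a vertex with an edge of $\Lambda$; $\Omega(\eta_{\partial\Lambda})$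 is the set of configurations $\eta_\Lambda$ on $\Lambda$ compatible with $\eta_{\partial\Lambda}$. A restricted move of length $n$ is a particle jump by $\pm n\hat e_3$ such that all edges of all $n$ crossed faces lie in $\Lambda$. For a probability measure $r$ on $\Omega$, with $r(\eta_\Lambda,\eta_{\partial\Lambda})$ the probability that the restrictions to $\Lambda,\partial\Lambda$ equal $\eta_\Lambda,\eta_{\partial\Lambda}$, $I_\Lambda(r)=\frac14\sum_{\eta_{\partial\Lambda}}\sum_{\eta_\Lambda,\eta'_\Lambda\in\Omega(\eta_{\partial\Lambda})}\frac{\mathbf 1\{\eta_\Lambda\to\eta'_\Lambda\text{ is a restricted move of length }n\}}{n}\big(\sqrt{r(\eta_\Lambda,\eta_{\partial\Lambda})}-\sqrt{r(\eta'_\Lambda,\eta_{\partial\Lambda})}\big)^2.$ *)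

theory Defs
  imports "HOL-Probability.Probability"
begin

text \<open>Vertices of T (= hexagonal faces of H) are points of Z^2.
  e1 = (1,0), e2 = (0,1), e3 = (-1,-1).\<close>

type_synonym pt = "int \<times> int"

datatype etype = Ty1 | Ty2 | Ty3

text \<open>An edge of H is b_i(u): the H-edge crossed by the T-edge from u to u + e_i.
  It is encoded as the pair (u, i).\<close>
type_synonym edge = "pt \<times> etype"

definition b1 :: "pt \<Rightarrow> edge" where "b1 u = (u, Ty1)"
definition b2 :: "pt \<Rightarrow> edge" where "b2 u = (u, Ty2)"
definition b3 :: "pt \<Rightarrow> edge" where "b3 u = (u, Ty3)"

text \<open>Vertices of H = triangular faces of T:
  VA u = triangle {u, u+(1,0), u+(1,1)},  VB u = triangle {u, u+(0,1), u+(1,1)}.\<close>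
datatype hvert = VA pt | VB pt

text \<open>Endpoints of an H-edge = the two triangles of T containing the crossing T-edge.\<close>
fun ends :: "edge \<Rightarrow> hvert set" where
  "ends ((x, y), Ty1) = {VA (x, y), VB (x, y - 1)}"
| "ends ((x, y), Ty2) = {VB (x, y), VA (x - 1, y)}"
| "ends ((x, y), Ty3) = {VA (x - 1, y - 1), VB (x - 1, y - 1)}"

type_synonym config = "edge \<Rightarrow> bool"

definition Omega :: "config set" where
  "Omega = {\<eta>. \<forall>v. \<exists>!e. \<eta> e \<and> v \<in> ends e}"

text \<open>Omega as a measurable space: the product (= Borel, for the product topology
  of the countable product of finite discrete spaces) sigma-algebra, restricted to Omega.\<close>
definition Omega_M :: "config measure" where
  "Omega_M = restrict_space (Pi\<^sub>M UNIV (\<lambda>_::edge. count_space (UNIV :: bool set))) Omega"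

definition glue :: "edge set \<Rightarrow> config \<Rightarrow> config \<Rightarrow> config" where
  "glue \<Lambda> \<xi> \<omega> = (\<lambda>e. if e \<in> \<Lambda> then \<xi> e else \<omega> e)"

definition compat_out :: "edge set \<Rightarrow> config \<Rightarrow> config set" where
  "compat_out \<Lambda> \<omega> = {\<xi> \<in> \<Lambda> \<rightarrow>\<^sub>E (UNIV :: bool set). glue \<Lambda> \<xi> \<omega> \<in> Omega}"

definition outside_alg :: "config measure \<Rightarrow> edge set \<Rightarrow> config measure" where
  "outside_alg M \<Lambda> = sigma (space M) {{\<omega> \<in> space M. \<omega> e} | e. e \<notin> \<Lambda>}"

definition gibbs :: "config measure \<Rightarrow> bool" where
  "gibbs M \<longleftrightarrow> prob_space M \<and> sets M = sets Omega_M \<and>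
     (\<forall>\<Lambda>. finite \<Lambda> \<longrightarrow> (\<forall>\<xi> \<in> \<Lambda> \<rightarrow>\<^sub>E (UNIV :: bool set).
        AE \<omega> in M. real_cond_exp M (outside_alg M \<Lambda>)
                     (indicator {\<omega>' \<in> space M. restrict \<omega>' \<Lambda> = \<xi>}) \<omega>
                 = (if \<xi> \<in> compat_out \<Lambda> \<omega> then 1 / real (card (compat_out \<Lambda> \<omega>)) else 0)))"

text \<open>The hexagonal face u of H has edges b1(u), b3(u+(1,1)), b2(u), b1(u-(1,0)), b3(u),
  b2(u-(0,1)) in cyclic order; its two alternating triples:\<close>
definition tri1 :: "pt \<Rightarrow> edge set" where
  "tri1 u = {b1 u, b2 u, b3 u}"
definition tri2 :: "pt \<Rightarrow> edge set" where
  "tri2 u = {b3 (fst u + 1, snd u + 1), b1 (fst u - 1, snd u), b2 (fst u, snd u - 1)}"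
definition face_edges :: "pt \<Rightarrow> edge set" where
  "face_edges u = tri1 u \<union> tri2 u"

definition rot :: "pt \<Rightarrow> config \<Rightarrow> config option" where
  "rot u \<eta> =
    (if (\<forall>e\<in>tri1 u. \<eta> e) \<and> (\<forall>e\<in>tri2 u. \<not> \<eta> e)
     then Some (\<lambda>e. if e \<in> tri1 u then False else if e \<in> tri2 u then True else \<eta> e)
     else if (\<forall>e\<in>tri2 u. \<eta> e) \<and> (\<forall>e\<in>tri1 u. \<not> \<eta> e)
     then Some (\<lambda>e. if e \<in> tri2 u then False else if e \<in> tri1 u then True else \<eta> e)
     else None)"

fun rots :: "pt list \<Rightarrow> config \<Rightarrow> config option" where
  "rots [] \<eta> = Some \<eta>"
| "rots (u # us) \<eta> = (case rot u \<eta> of None \<Rightarrow> None | Some \<eta>' \<Rightarrow> rots us \<eta>')"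

text \<open>Faces crossed by the jump of the particle at b3(v) by +n e3 (k = 1..n) and by
  -n e3 (k = 0..n-1), in the order in which they are crossed.\<close>
definition faces_plus :: "pt \<Rightarrow> nat \<Rightarrow> pt list" where
  "faces_plus v n = map (\<lambda>k. (fst v - int k, snd v - int k)) [1..<n+1]"
definition faces_minus :: "pt \<Rightarrow> nat \<Rightarrow> pt list" where
  "faces_minus v n = map (\<lambda>k. (fst v + int k, snd v + int k)) [0..<n]"

definition restricted_move :: "edge set \<Rightarrow> nat \<Rightarrow> config \<Rightarrow> config \<Rightarrow> bool" where
  "restricted_move \<Lambda> n \<xi> \<xi>' \<longleftrightarrow> n \<ge> 1 \<and>
     (\<exists>v fs. \<xi> (b3 v) \<and> (fs = faces_plus v n \<or> fs = faces_minus v n) \<and>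
            (\<forall>u \<in> set fs. face_edges u \<subseteq> \<Lambda>) \<and> rots fs \<xi> = Some \<xi>')"

definition bdry :: "edge set \<Rightarrow> edge set" where
  "bdry \<Lambda> = {e. e \<notin> \<Lambda> \<and> (\<exists>e' \<in> \<Lambda>. ends e \<inter> ends e' \<noteq> {})}"

definition compat_bdry :: "edge set \<Rightarrow> config \<Rightarrow> config set" where
  "compat_bdry \<Lambda> \<zeta> = {\<xi> \<in> \<Lambda> \<rightarrow>\<^sub>E (UNIV :: bool set).
      \<exists>\<omega> \<in> Omega. restrict \<omega> \<Lambda> = \<xi> \<and> restrict \<omega> (bdry \<Lambda>) = \<zeta>}"

definition rprob :: "config measure \<Rightarrow> edge set \<Rightarrow> config \<Rightarrow> config \<Rightarrow> real" where
  "rprob r \<Lambda> \<xi> \<zeta> = measure r {\<omega> \<in> space r. restrict \<omega> \<Lambda> = \<xi> \<and> restrict \<omega> (bdry \<Lambda>) = \<zeta>}"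

text \<open>Weight 1{xi -> xi' is a restricted move of length n}/n (summed over n; the length is
  determined by xi, xi').\<close>
definition move_weight :: "edge set \<Rightarrow> config \<Rightarrow> config \<Rightarrow> real" where
  "move_weight \<Lambda> \<xi> \<xi>' = (\<Sum>n \<in> {n. restricted_move \<Lambda> n \<xi> \<xi>'}. 1 / real n)"

definition I_fun :: "edge set \<Rightarrow> config measure \<Rightarrow> real" where
  "I_fun \<Lambda> r = 1/4 * (\<Sum>\<zeta> \<in> bdry \<Lambda> \<rightarrow>\<^sub>E (UNIV :: bool set).
      \<Sum>\<xi> \<in> compat_bdry \<Lambda> \<zeta>. \<Sum>\<xi>' \<in> compat_bdry \<Lambda> \<zeta>.
        move_weight \<Lambda> \<xi> \<xi>' * (sqrt (rprob r \<Lambda> \<xi> \<zeta>) - sqrt (rprob r \<Lambda> \<xi>' \<zeta>))\<^sup>2)"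

end

theory Submission
  imports Defs
begin


definition inc :: "config \<Rightarrow> edge \<Rightarrow> int" where
  "inc \<eta> e = (if \<eta> e then -2 else 1)"

definition eat :: "hvert \<Rightarrow> edge set" where
  "eat v = (case v of VA (x,y) \<Rightarrow> {((x,y),Ty1), ((x+1,y),Ty2), ((x+1,y+1),Ty3)}
                    | VB (x,y) \<Rightarrow> {((x,y),Ty2), ((x,y+1),Ty1), ((x+1,y+1),Ty3)})"

lemma ends_eat: "v \<in> ends e \<longleftrightarrow> e \<in> eat v"
proof -
  obtain a b t where e: "e = ((a,b),t)" by (metis prod.collapse)
  show ?thesis
  proof (cases v)
    case (VA p) then obtain x y where v: "v = VA (x,y)" by (cases p) auto
    show ?thesis unfolding e v by (cases t) (auto simp: eat_def)
  next
    case (VB p) then obtain x y where v: "v = VB (x,y)" by (cases p) auto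
    show ?thesis unfolding e v by (cases t) (auto simp: eat_def)
  qed
qed

lemma ends_eat2: "v \<in> ends ((x,y),t) \<longleftrightarrow> ((x,y),t) \<in> eat v"
  by (rule ends_eat)

lemma ex1_three: "p \<noteq> q \<Longrightarrow> q \<noteq> r \<Longrightarrow> p \<noteq> r \<Longrightarrow>
  (\<exists>!e. \<eta> e \<and> (e = p \<or> e = q \<or> e = r)) \<longleftrightarrow> inc \<eta> p + inc \<eta> q + inc \<eta> r = 0"
  unfolding inc_def by (cases "\<eta> p"; cases "\<eta> q"; cases "\<eta> r") auto

definition TA where "TA \<eta> x y \<longleftrightarrow> inc \<eta> ((x,y),Ty1) + inc \<eta> ((x+1,y),Ty2) + inc \<eta> ((x+1,y+1),Ty3) = 0"
definition TB where "TB \<eta> x y \<longleftrightarrow> inc \<eta> ((x,y),Ty2) + inc \<eta> ((x,y+1),Ty1) + inc \<eta> ((x+1,y+1),Ty3) = 0"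

lemma Omega_iff: "\<eta> \<in> Omega \<longleftrightarrow> (\<forall>x y. TA \<eta> x y \<and> TB \<eta> x y)"
proof -
  have "\<eta> \<in> Omega \<longleftrightarrow> (\<forall>v. \<exists>!e. \<eta> e \<and> e \<in> eat v)"
    unfolding Omega_def by (simp add: ends_eat)
  also have "\<dots> \<longleftrightarrow> (\<forall>x y. TA \<eta> x y \<and> TB \<eta> x y)"
  proof
    assume H: "\<forall>v. \<exists>!e. \<eta> e \<and> e \<in> eat v"
    show "\<forall>x y. TA \<eta> x y \<and> TB \<eta> x y"
    proof (intro allI conjI)
      fix x y
      show "TA \<eta> x y" using H[rule_format, of "VA (x,y)"] unfolding TA_def eat_def
        by (simp add: ex1_three)
      show "TB \<eta> x y" using H[rule_format, of "VB (x,y)"] unfolding TB_def eat_def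
        by (simp add: ex1_three)
    qed
  next
    assume H: "\<forall>x y. TA \<eta> x y \<and> TB \<eta> x y"
    show "\<forall>v. \<exists>!e. \<eta> e \<and> e \<in> eat v"
    proof
      fix v show "\<exists>!e. \<eta> e \<and> e \<in> eat v"
      proof (cases v)
        case (VA p) then obtain x y where "v = VA (x,y)" by (cases p) auto
        then show ?thesis using H unfolding TA_def eat_def by (simp add: ex1_three)
      next
        case (VB p) then obtain x y where "v = VB (x,y)" by (cases p) auto
        then show ?thesis using H unfolding TB_def eat_def by (simp add: ex1_three)
      qed
    qed
  qed
  finally show ?thesis .
qed



definition ht :: "config \<Rightarrow> (pt \<Rightarrow> int) \<Rightarrow> bool" where
  "ht \<eta> h \<longleftrightarrow> (\<forall>x y. h (x+1,y) - h (x,y) = inc \<eta> ((x,y),Ty1) \<and>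
                      h (x,y+1) - h (x,y) = inc \<eta> ((x,y),Ty2) \<and>
                      h (x-1,y-1) - h (x,y) = inc \<eta> ((x,y),Ty3))"

lemma htD:
  assumes "ht \<eta> h"
  shows "h (x+1,y) - h (x,y) = inc \<eta> ((x,y),Ty1)"
    "h (x,y+1) - h (x,y) = inc \<eta> ((x,y),Ty2)"
    "h (x-1,y-1) - h (x,y) = inc \<eta> ((x,y),Ty3)"
  using assms unfolding ht_def by auto

lemma ht_Omega: "ht \<eta> h \<Longrightarrow> \<eta> \<in> Omega"
proof -
  assume H: "ht \<eta> h"
  show ?thesis unfolding Omega_iff TA_def TB_def
  proof (intro allI conjI)
    fix x y
    show "inc \<eta> ((x, y), Ty1) + inc \<eta> ((x + 1, y), Ty2) + inc \<eta> ((x + 1, y + 1), Ty3) = 0"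
      using htD(1)[OF H, of x y] htD(2)[OF H, of "x+1" y] htD(3)[OF H, of "x+1" "y+1"] by simp
    show "inc \<eta> ((x, y), Ty2) + inc \<eta> ((x, y + 1), Ty1) + inc \<eta> ((x + 1, y + 1), Ty3) = 0"
      using htD(2)[OF H, of x y] htD(1)[OF H, of x "y+1"] htD(3)[OF H, of "x+1" "y+1"] by simp
  qed
qed

lemma int_step_const:
  fixes f :: "int \<Rightarrow> 'a"
  assumes "\<And>k. f (k+1) = f k"
  shows "f y = f 0"
proof (induct y rule: int_induct[where k=0])
  case base then show ?case by simp
next
  case (step1 i) then show ?case using assms[of i] by simp
next
  case (step2 i) then show ?case using assms[of "i-1"] by simp
qed

definition S :: "(int \<Rightarrow> int) \<Rightarrow> int \<Rightarrow> int" where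
  "S f y = (if 0 \<le> y then (\<Sum>k\<in>{0..<y}. f k) else - (\<Sum>k\<in>{y..<0}. f k))"

lemma S_step: "S f (y+1) - S f y = f y"
proof (cases "0 \<le> y")
  case True
  have "{0..<y+1} = insert y {0..<y}" using True by auto
  then show ?thesis using True by (simp add: S_def)
next
  case False
  show ?thesis
  proof (cases "y = -1")
    case True
    have "{-1..<0::int} = {-1}" by auto
    then show ?thesis using True by (simp add: S_def)
  next
    case F2: False
    have "{y..<0} = insert y {y+1..<0}" using False by auto
    then show ?thesis using False F2 by (simp add: S_def)
  qed
qed

lemma S_zero: "S f 0 = 0" by (simp add: S_def)

lemma Omega_ht: assumes "\<eta> \<in> Omega" shows "\<exists>h. ht \<eta> h"
proof -
  have T: "TA \<eta> x y" "TB \<eta> x y" for x y using assms Omega_iff by auto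
  define h where "h = (\<lambda>(x,y). S (\<lambda>k. inc \<eta> ((k,0),Ty1)) x + S (\<lambda>k. inc \<eta> ((x,k),Ty2)) y)"
  have e2: "h (x,y+1) - h (x,y) = inc \<eta> ((x,y),Ty2)" for x y
    using S_step[of "\<lambda>k. inc \<eta> ((x,k),Ty2)" y] by (simp add: h_def)
  have e1: "h (x+1,y) - h (x,y) = inc \<eta> ((x,y),Ty1)" for x y
  proof -
    define g where "g = (\<lambda>y. h (x+1,y) - h (x,y) - inc \<eta> ((x,y),Ty1))"
    have "g (k+1) = g k" for k
    proof -
      have "g (k+1) - g k = (h (x+1,k+1) - h (x+1,k)) - (h (x,k+1) - h(x,k))
          - inc \<eta> ((x,k+1),Ty1) + inc \<eta> ((x,k),Ty1)" by (simp add: g_def)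
      also have "\<dots> = inc \<eta> ((x+1,k),Ty2) - inc \<eta> ((x,k),Ty2)
          - inc \<eta> ((x,k+1),Ty1) + inc \<eta> ((x,k),Ty1)" using e2 by simp
      also have "\<dots> = 0" using T[of x k] unfolding TA_def TB_def by simp
      finally show ?thesis by simp
    qed
    then have "g y = g 0" by (rule int_step_const)
    also have "g 0 = 0" using S_step[of "\<lambda>k. inc \<eta> ((k,0),Ty1)" x]
      by (simp add: g_def h_def S_zero)
    finally show ?thesis by (simp add: g_def)
  qed
  have e3: "h (x-1,y-1) - h (x,y) = inc \<eta> ((x,y),Ty3)" for x y
    using T(1)[of "x-1" "y-1"] e1[of "x-1" "y-1"] e2[of x "y-1"] unfolding TA_def by simp
  have "ht \<eta> h" unfolding ht_def using e1 e2 e3 by blast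
  then show ?thesis by blast
qed

lemma Omega_ht_iff: "\<eta> \<in> Omega \<longleftrightarrow> (\<exists>h. ht \<eta> h)"
  using Omega_ht ht_Omega by blast

lemma ht_eq: assumes "ht \<eta> h" "ht \<eta>' h" shows "\<eta> = \<eta>'"
proof
  fix e :: edge
  obtain x y t where e: "e = ((x,y),t)" by (metis prod.collapse)
  have "inc \<eta> e = inc \<eta>' e"
    using htD[OF assms(1), of x y] htD[OF assms(2), of x y] unfolding e by (cases t) auto
  then show "\<eta> e = \<eta>' e" unfolding inc_def by (auto split: if_splits)
qed

lemma ht_shift: "ht \<eta> h \<Longrightarrow> ht \<eta> (\<lambda>u. h u + c)"
  unfolding ht_def by simp



fun tgt :: "edge \<Rightarrow> pt" where
  "tgt ((x,y),Ty1) = (x+1,y)"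
| "tgt ((x,y),Ty2) = (x,y+1)"
| "tgt ((x,y),Ty3) = (x-1,y-1)"

lemma ht_alt: "ht \<eta> h \<longleftrightarrow> (\<forall>e. h (tgt e) - h (fst e) = inc \<eta> e)"
proof
  assume H: "ht \<eta> h"
  show "\<forall>e. h (tgt e) - h (fst e) = inc \<eta> e"
  proof
    fix e :: edge
    obtain x y t where e: "e = ((x,y),t)" by (metis prod.collapse)
    show "h (tgt e) - h (fst e) = inc \<eta> e" unfolding e using htD[OF H, of x y] by (cases t) auto
  qed
next
  assume H: "\<forall>e. h (tgt e) - h (fst e) = inc \<eta> e"
  show "ht \<eta> h" unfolding ht_def
  proof (intro allI)
    fix x y
    show "h (x + 1, y) - h (x, y) = inc \<eta> ((x, y), Ty1) \<and>
           h (x, y + 1) - h (x, y) = inc \<eta> ((x, y), Ty2) \<and>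
           h (x - 1, y - 1) - h (x, y) = inc \<eta> ((x, y), Ty3)"
      using H[rule_format, of "((x,y),Ty1)"] H[rule_format, of "((x,y),Ty2)"]
        H[rule_format, of "((x,y),Ty3)"] by simp
  qed
qed

lemma tri1_iff: "e \<in> tri1 u \<longleftrightarrow> fst e = u"
proof -
  obtain x y t where e: "e = ((x,y),t)" by (metis prod.collapse)
  show ?thesis unfolding e tri1_def b1_def b2_def b3_def by (cases t) auto
qed

lemma tri2_iff: "e \<in> tri2 u \<longleftrightarrow> tgt e = u"
proof -
  obtain x y t where e: "e = ((x,y),t)" by (metis prod.collapse)
  obtain a b where u: "u = (a,b)" by (metis prod.collapse)
  show ?thesis unfolding e u tri2_def b1_def b2_def b3_def by (cases t) auto
qed

lemma tgt_ne: "tgt e \<noteq> fst e"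
proof -
  obtain x y t where e: "e = ((x,y),t)" by (metis prod.collapse)
  show ?thesis unfolding e by (cases t) auto
qed

definition rotA :: "pt \<Rightarrow> config \<Rightarrow> config" where
  "rotA u \<eta> = (\<lambda>e. if e \<in> tri1 u then False else if e \<in> tri2 u then True else \<eta> e)"
definition rotB :: "pt \<Rightarrow> config \<Rightarrow> config" where
  "rotB u \<eta> = (\<lambda>e. if e \<in> tri2 u then False else if e \<in> tri1 u then True else \<eta> e)"

lemma rot_cases:
  assumes "rot u \<eta> = Some \<eta>'"
  shows "((\<forall>e\<in>tri1 u. \<eta> e) \<and> (\<forall>e\<in>tri2 u. \<not> \<eta> e) \<and> \<eta>' = rotA u \<eta>) \<or>
         ((\<forall>e\<in>tri2 u. \<eta> e) \<and> (\<forall>e\<in>tri1 u. \<not> \<eta> e) \<and> \<eta>' = rotB u \<eta>)"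
  using assms unfolding rot_def rotA_def rotB_def by (auto split: if_splits)

lemma rotA_ht:
  assumes H: "ht \<eta> h" and A: "\<forall>e\<in>tri1 u. \<eta> e" "\<forall>e\<in>tri2 u. \<not> \<eta> e"
  shows "ht (rotA u \<eta>) (h(u := h u - 3))"
  unfolding ht_alt
proof
  fix e
  have he: "h (tgt e) - h (fst e) = inc \<eta> e" using H ht_alt by blast
  show "(h(u := h u - 3)) (tgt e) - (h(u := h u - 3)) (fst e) = inc (rotA u \<eta>) e"
  proof (cases "fst e = u")
    case True
    then have "e \<in> tri1 u" "tgt e \<noteq> u" using tri1_iff[of e u] tgt_ne[of e] by auto
    then show ?thesis using True he A unfolding rotA_def inc_def by auto
  next
    case False
    show ?thesis
    proof (cases "tgt e = u")
      case True
      then have "e \<in> tri2 u" "e \<notin> tri1 u" using tri1_iff[of e u] tri2_iff[of e u] False by auto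
      then show ?thesis using True False he A unfolding rotA_def inc_def by auto
    next
      case F2: False
      then have "e \<notin> tri2 u" "e \<notin> tri1 u" using tri1_iff[of e u] tri2_iff[of e u] False by auto
      then show ?thesis using F2 False he unfolding rotA_def inc_def by auto
    qed
  qed
qed

lemma rotB_ht:
  assumes H: "ht \<eta> h" and A: "\<forall>e\<in>tri2 u. \<eta> e" "\<forall>e\<in>tri1 u. \<not> \<eta> e"
  shows "ht (rotB u \<eta>) (h(u := h u + 3))"
  unfolding ht_alt
proof
  fix e
  have he: "h (tgt e) - h (fst e) = inc \<eta> e" using H ht_alt by blast
  show "(h(u := h u + 3)) (tgt e) - (h(u := h u + 3)) (fst e) = inc (rotB u \<eta>) e"
  proof (cases "fst e = u")
    case True
    then have "e \<in> tri1 u" "tgt e \<noteq> u" "e \<notin> tri2 u" using tri1_iff[of e u] tri2_iff[of e u] tgt_ne[of e] by auto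
    then show ?thesis using True he A unfolding rotB_def inc_def by auto
  next
    case False
    show ?thesis
    proof (cases "tgt e = u")
      case True
      then have "e \<in> tri2 u" "e \<notin> tri1 u" using tri1_iff[of e u] tri2_iff[of e u] False by auto
      then show ?thesis using True False he A unfolding rotB_def inc_def by auto
    next
      case F2: False
      then have "e \<notin> tri2 u" "e \<notin> tri1 u" using tri1_iff[of e u] tri2_iff[of e u] False by auto
      then show ?thesis using F2 False he unfolding rotB_def inc_def by auto
    qed
  qed
qed

lemma rot_Omega: "\<eta> \<in> Omega \<Longrightarrow> rot u \<eta> = Some \<eta>' \<Longrightarrow> \<eta>' \<in> Omega"
  using rot_cases[of u \<eta> \<eta>'] rotA_ht rotB_ht Omega_ht_iff by metis

lemma tri_disj: "e \<in> tri1 u \<Longrightarrow> e \<notin> tri2 u"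
  using tri1_iff tri2_iff tgt_ne by metis

lemma rot_sym: "rot u \<eta> = Some \<eta>' \<Longrightarrow> rot u \<eta>' = Some \<eta>"
proof -
  assume R: "rot u \<eta> = Some \<eta>'"
  from rot_cases[OF R] show ?thesis
  proof
    assume A: "(\<forall>e\<in>tri1 u. \<eta> e) \<and> (\<forall>e\<in>tri2 u. \<not> \<eta> e) \<and> \<eta>' = rotA u \<eta>"
    have a1: "\<forall>e\<in>tri1 u. \<not> \<eta>' e" using A unfolding rotA_def by auto
    have a2: "\<forall>e\<in>tri2 u. \<eta>' e" using A tri_disj unfolding rotA_def by auto
    have "rotB u \<eta>' = \<eta>"
    proof
      fix e show "rotB u \<eta>' e = \<eta> e"
        using A tri_disj[of e u] unfolding rotA_def rotB_def by auto
    qed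
    moreover have "tri1 u \<noteq> {}" unfolding tri1_def by auto
    ultimately show ?thesis using a1 a2 unfolding rot_def rotB_def by auto
  next
    assume A: "(\<forall>e\<in>tri2 u. \<eta> e) \<and> (\<forall>e\<in>tri1 u. \<not> \<eta> e) \<and> \<eta>' = rotB u \<eta>"
    have a1: "\<forall>e\<in>tri1 u. \<eta>' e" using A tri_disj unfolding rotB_def by auto
    have a2: "\<forall>e\<in>tri2 u. \<not> \<eta>' e" using A unfolding rotB_def by auto
    have "rotA u \<eta>' = \<eta>"
    proof
      fix e show "rotA u \<eta>' e = \<eta> e"
        using A tri_disj[of e u] unfolding rotA_def rotB_def by auto
    qed
    then show ?thesis using a1 a2 unfolding rot_def rotA_def by auto
  qed
qed

lemma locmax_rot:
  assumes H: "ht \<eta> h"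
    and L1: "\<And>e. fst e = u \<Longrightarrow> h (tgt e) < h u"
    and L2: "\<And>e. tgt e = u \<Longrightarrow> h (fst e) < h u"
  shows "rot u \<eta> = Some (rotA u \<eta>)"
proof -
  have he: "h (tgt e) - h (fst e) = inc \<eta> e" for e using H ht_alt by blast
  have 1: "\<forall>e\<in>tri1 u. \<eta> e"
  proof
    fix e assume "e \<in> tri1 u" then have "fst e = u" using tri1_iff by auto
    then show "\<eta> e" using L1[of e] he[of e] unfolding inc_def by (auto split: if_splits)
  qed
  have 2: "\<forall>e\<in>tri2 u. \<not> \<eta> e"
  proof
    fix e assume "e \<in> tri2 u" then have "tgt e = u" using tri2_iff by auto
    then show "\<not> \<eta> e" using L2[of e] he[of e] unfolding inc_def by (auto split: if_splits)
  qed
  show ?thesis using 1 2 unfolding rot_def rotA_def by simp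
qed

lemma locmax_conds:
  assumes H: "ht \<eta> h"
    and L1: "\<And>e. fst e = u \<Longrightarrow> h (tgt e) < h u"
    and L2: "\<And>e. tgt e = u \<Longrightarrow> h (fst e) < h u"
  shows "(\<forall>e\<in>tri1 u. \<eta> e) \<and> (\<forall>e\<in>tri2 u. \<not> \<eta> e)"
proof -
  have he: "h (tgt e) - h (fst e) = inc \<eta> e" for e using H ht_alt by blast
  have 1: "\<forall>e\<in>tri1 u. \<eta> e"
  proof
    fix e assume "e \<in> tri1 u" then have "fst e = u" using tri1_iff by auto
    then show "\<eta> e" using L1[of e] he[of e] unfolding inc_def by (auto split: if_splits)
  qed
  have 2: "\<forall>e\<in>tri2 u. \<not> \<eta> e"
  proof
    fix e assume "e \<in> tri2 u" then have "tgt e = u" using tri2_iff by auto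
    then show "\<not> \<eta> e" using L2[of e] he[of e] unfolding inc_def by (auto split: if_splits)
  qed
  show ?thesis using 1 2 by simp
qed

lemma rotA_some: "(\<forall>e\<in>tri1 u. \<eta> e) \<Longrightarrow> (\<forall>e\<in>tri2 u. \<not> \<eta> e) \<Longrightarrow> rot u \<eta> = Some (rotA u \<eta>)"
  unfolding rot_def rotA_def by simp



definition Box :: "int \<Rightarrow> pt set" where
  "Box N = {(x,y). \<bar>x\<bar> \<le> N \<and> \<bar>y\<bar> \<le> N}"

lemma finite_Box: "finite (Box N)"
proof -
  have "Box N \<subseteq> {-N..N} \<times> {-N..N}" unfolding Box_def by auto
  then show ?thesis by (rule finite_subset) auto
qed

definition Rb :: "int \<Rightarrow> config \<Rightarrow> config \<Rightarrow> bool" where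
  "Rb N a b \<longleftrightarrow> (\<exists>u\<in>Box N. rot u a = Some b)"

lemma inc_cases: "inc \<eta> e = 1 \<or> inc \<eta> e = -2" unfolding inc_def by auto

lemma nbr1: assumes "ht \<eta> h" shows "h (tgt e) \<noteq> h (fst e) \<and> h (tgt e) - h (fst e) \<le> 2"
proof -
  have "h (tgt e) - h (fst e) = inc \<eta> e" using assms ht_alt by blast
  then show ?thesis using inc_cases[of \<eta> e] by auto
qed
lemma nbr2: assumes "ht \<eta> h" shows "h (fst e) \<noteq> h (tgt e) \<and> h (fst e) - h (tgt e) \<le> 2"
proof -
  have "h (tgt e) - h (fst e) = inc \<eta> e" using assms ht_alt by blast
  then show ?thesis using inc_cases[of \<eta> e] by auto
qed

lemma mod3_edge:
  assumes "ht \<eta> h" "ht \<eta>' h'"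
  shows "((h (tgt e) - h' (tgt e)) - (h (fst e) - h' (fst e))) mod 3 = 0"
proof -
  have "h (tgt e) - h (fst e) = inc \<eta> e" "h' (tgt e) - h' (fst e) = inc \<eta>' e"
    using assms ht_alt by blast+
  then have "(h (tgt e) - h' (tgt e)) - (h (fst e) - h' (fst e)) \<in> {0, 3, -3}"
    using inc_cases[of \<eta> e] inc_cases[of \<eta>' e] by auto
  then show ?thesis by auto
qed

lemma m3le: assumes "(a - b) mod 3 = 0" "b < a" shows "b \<le> (a::int) - 3"
proof -
  obtain k where k: "a - b = 3 * k" using assms(1) by (auto simp: dvd_def dest!: mod_0_imp_dvd)
  then have "k > 0" using assms(2) by linarith
  then show ?thesis using k by linarith
qed
lemma m3sym: "(a - b) mod 3 = 0 \<Longrightarrow> (b - a) mod (3::int) = 0"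
  by (metis dvd_minus_iff minus_diff_eq mod_0_imp_dvd dvd_imp_mod_0)

lemma maxstep:
  assumes H: "ht \<eta> h" and H': "ht \<eta>' h'"
    and out: "\<And>p. p \<notin> Box N \<Longrightarrow> h p = h' p"
    and m3: "\<And>p. (h p - h' p) mod 3 = 0"
    and pos: "h p0 > h' p0"
  shows "\<exists>u\<in>Box N. h u - h' u \<ge> 3 \<and> (\<forall>e\<in>tri1 u. \<eta> e) \<and> (\<forall>e\<in>tri2 u. \<not> \<eta> e)"
proof -
  define d where "d = (\<lambda>p. h p - h' p)"
  have p0: "p0 \<in> Box N" using out[of p0] pos by fastforce
  define m where "m = Max (d ` Box N)"
  have fin: "finite (d ` Box N)" using finite_Box by auto
  have dle: "d p \<le> m" if "p \<in> Box N" for p using that fin unfolding m_def by auto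
  have "d p0 \<le> m" using dle p0 by auto
  then have mpos: "m > 0" using pos unfolding d_def by auto
  have "m \<in> d ` Box N" unfolding m_def using fin p0 by (intro Max_in) auto
  define M where "M = {p\<in>Box N. d p = m}"
  have Mfin: "finite M" unfolding M_def using finite_Box by auto
  have Mne: "M \<noteq> {}" using \<open>m \<in> d ` Box N\<close> unfolding M_def by auto
  define hm where "hm = Max (h ` M)"
  have "hm \<in> h ` M" unfolding hm_def using Mfin Mne by (intro Max_in) auto
  then obtain u where uM: "u \<in> M" and hu: "h u = hm" by auto
  have hle: "h p \<le> h u" if "p \<in> M" for p using that Mfin hu unfolding hm_def by auto
  have uB: "u \<in> Box N" and du: "d u = m" using uM unfolding M_def by auto
  have dall: "d p \<le> m" for p
  proof (cases "p \<in> Box N")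
    case True then show ?thesis using dle by auto
  next
    case False then show ?thesis using out mpos unfolding d_def by auto
  qed
  have key: "h w < h u" if ne: "h w \<noteq> h u" and le2: "h' w - h' u \<le> 2" and
    m3w: "(d w - d u) mod 3 = 0" for w
  proof (cases "d w = m")
    case True
    then have "w \<in> Box N" using out[of w] mpos unfolding d_def by fastforce
    then have "w \<in> M" using True unfolding M_def by auto
    then show ?thesis using hle[of w] ne by linarith
  next
    case False
    then have "d w < m" using dall[of w] by auto
    with m3w du m3le[of "d u" "d w"] m3sym[of "d w" "d u"] have "d w \<le> m - 3" by auto
    then show ?thesis using le2 du unfolding d_def by auto
  qed
  have m3e: "(d (tgt e) - d (fst e)) mod 3 = 0" for e using mod3_edge[OF H H', of e] unfolding d_def by simp
  have L1: "h (tgt e) < h u" if "fst e = u" for e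
  proof (rule key)
    show "h (tgt e) \<noteq> h u" using nbr1[OF H, of e] that by auto
    show "h' (tgt e) - h' u \<le> 2" using nbr1[OF H', of e] that by auto
    show "(d (tgt e) - d u) mod 3 = 0" using m3e[of e] that by simp
  qed
  have L2: "h (fst e) < h u" if "tgt e = u" for e
  proof (rule key)
    show "h (fst e) \<noteq> h u" using nbr2[OF H, of e] that by auto
    show "h' (fst e) - h' u \<le> 2" using nbr2[OF H', of e] that by auto
    show "(d (fst e) - d u) mod 3 = 0" using m3e[of e] that m3sym by auto
  qed
  have "(\<forall>e\<in>tri1 u. \<eta> e) \<and> (\<forall>e\<in>tri2 u. \<not> \<eta> e)" by (rule locmax_conds[OF H L1 L2])
  moreover have "h u - h' u \<ge> 3" using du mpos m3[of u] m3le[of "d u" 0] unfolding d_def by auto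
  ultimately show ?thesis using uB by blast
qed

lemma mod3_step: "(a::int) mod 3 = 0 \<Longrightarrow> (a - 3) mod 3 = 0" by simp
lemma mod3_step': "(a::int) mod 3 = 0 \<Longrightarrow> (a + 3) mod 3 = 0" by simp

lemma conn_aux:
  "nat (\<Sum>p\<in>Box N. \<bar>h p - h' p\<bar>) = n \<Longrightarrow> ht \<eta> h \<Longrightarrow> ht \<eta>' h' \<Longrightarrow>
   (\<forall>p. p \<notin> Box N \<longrightarrow> h p = h' p) \<Longrightarrow> (\<forall>p. (h p - h' p) mod 3 = 0) \<Longrightarrow> (Rb N)\<^sup>*\<^sup>* \<eta> \<eta>'"
proof (induction n arbitrary: \<eta> h \<eta>' h' rule: less_induct)
  case (less n)
  note H = less.prems(2) and H' = less.prems(3) and out = less.prems(4) and m3 = less.prems(5)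
  show ?case
  proof (cases "\<forall>p. h p = h' p")
    case True
    then have "h = h'" by auto
    then have "\<eta> = \<eta>'" using ht_eq H H' by auto
    then show ?thesis by simp
  next
    case False
    show ?thesis
    proof (cases "\<exists>p0. h p0 > h' p0")
      case True
      then obtain p0 where p0: "h p0 > h' p0" by auto
      obtain u where uB: "u \<in> Box N" and d3: "h u - h' u \<ge> 3" and
        c1: "\<forall>e\<in>tri1 u. \<eta> e" and c2: "\<forall>e\<in>tri2 u. \<not> \<eta> e"
        using maxstep[OF H H' _ _ p0] out m3 by blast
      define h1 where "h1 = h(u := h u - 3)"
      have H1: "ht (rotA u \<eta>) h1" unfolding h1_def by (rule rotA_ht[OF H c1 c2])
      have R: "Rb N \<eta> (rotA u \<eta>)" unfolding Rb_def using uB rotA_some[OF c1 c2] by blast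
      have sm: "(\<Sum>p\<in>Box N. \<bar>h p - h' p\<bar>) = \<bar>h u - h' u\<bar> + (\<Sum>p\<in>Box N - {u}. \<bar>h p - h' p\<bar>)"
        using uB finite_Box by (simp add: sum.remove)
      have sm1: "(\<Sum>p\<in>Box N. \<bar>h1 p - h' p\<bar>) = \<bar>h1 u - h' u\<bar> + (\<Sum>p\<in>Box N - {u}. \<bar>h1 p - h' p\<bar>)"
        using uB finite_Box by (simp add: sum.remove)
      have eqr: "(\<Sum>p\<in>Box N - {u}. \<bar>h1 p - h' p\<bar>) = (\<Sum>p\<in>Box N - {u}. \<bar>h p - h' p\<bar>)"
        unfolding h1_def by (rule sum.cong) auto
      have nn: "(\<Sum>p\<in>Box N - {u}. \<bar>h p - h' p\<bar>) \<ge> 0" by (rule sum_nonneg) auto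
      have S1: "(\<Sum>p\<in>Box N. \<bar>h1 p - h' p\<bar>) = (\<Sum>p\<in>Box N. \<bar>h p - h' p\<bar>) - 3"
        using sm sm1 eqr d3 unfolding h1_def by simp
      have S2: "(\<Sum>p\<in>Box N. \<bar>h p - h' p\<bar>) \<ge> 3" using sm nn d3 by linarith
      have lt: "nat (\<Sum>p\<in>Box N. \<bar>h1 p - h' p\<bar>) < n"
        using S1 S2 less.prems(1) by arith
      have out1: "\<forall>p. p \<notin> Box N \<longrightarrow> h1 p = h' p" using out uB unfolding h1_def by auto
      have m31: "\<forall>p. (h1 p - h' p) mod 3 = 0"
        using m3 mod3_step[of "h u - h' u"] unfolding h1_def by (auto simp: algebra_simps)
      have "(Rb N)\<^sup>*\<^sup>* (rotA u \<eta>) \<eta>'" by (rule less.IH[OF lt refl H1 H' out1 m31])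
      then show ?thesis by (rule converse_rtranclp_into_rtranclp[of "Rb N", OF R])
    next
      case F2: False
      then obtain p0 where p0: "h' p0 > h p0" using False by (metis not_less_iff_gr_or_eq)
      obtain u where uB: "u \<in> Box N" and d3: "h' u - h u \<ge> 3" and
        c1: "\<forall>e\<in>tri1 u. \<eta>' e" and c2: "\<forall>e\<in>tri2 u. \<not> \<eta>' e"
        using maxstep[OF H' H _ _ p0] out m3 m3sym by metis
      define h1 where "h1 = h'(u := h' u - 3)"
      have H1: "ht (rotA u \<eta>') h1" unfolding h1_def by (rule rotA_ht[OF H' c1 c2])
      have "rot u \<eta>' = Some (rotA u \<eta>')" by (rule rotA_some[OF c1 c2])
      then have "rot u (rotA u \<eta>') = Some \<eta>'" by (rule rot_sym)
      then have R: "Rb N (rotA u \<eta>') \<eta>'" unfolding Rb_def using uB by blast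
      have sm: "(\<Sum>p\<in>Box N. \<bar>h p - h' p\<bar>) = \<bar>h u - h' u\<bar> + (\<Sum>p\<in>Box N - {u}. \<bar>h p - h' p\<bar>)"
        using uB finite_Box by (simp add: sum.remove)
      have sm1: "(\<Sum>p\<in>Box N. \<bar>h p - h1 p\<bar>) = \<bar>h u - h1 u\<bar> + (\<Sum>p\<in>Box N - {u}. \<bar>h p - h1 p\<bar>)"
        using uB finite_Box by (simp add: sum.remove)
      have eqr: "(\<Sum>p\<in>Box N - {u}. \<bar>h p - h1 p\<bar>) = (\<Sum>p\<in>Box N - {u}. \<bar>h p - h' p\<bar>)"
        unfolding h1_def by (rule sum.cong) auto
      have nn: "(\<Sum>p\<in>Box N - {u}. \<bar>h p - h' p\<bar>) \<ge> 0" by (rule sum_nonneg) auto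
      have S1: "(\<Sum>p\<in>Box N. \<bar>h p - h1 p\<bar>) = (\<Sum>p\<in>Box N. \<bar>h p - h' p\<bar>) - 3"
        using sm sm1 eqr d3 unfolding h1_def by simp
      have S2: "(\<Sum>p\<in>Box N. \<bar>h p - h' p\<bar>) \<ge> 3" using sm nn d3 by linarith
      have lt: "nat (\<Sum>p\<in>Box N. \<bar>h p - h1 p\<bar>) < n"
        using S1 S2 less.prems(1) by arith
      have out1: "\<forall>p. p \<notin> Box N \<longrightarrow> h p = h1 p" using out uB unfolding h1_def by auto
      have m31: "\<forall>p. (h p - h1 p) mod 3 = 0"
        using m3 mod3_step'[of "h u - h' u"] unfolding h1_def by (auto simp: algebra_simps)
      have A: "(Rb N)\<^sup>*\<^sup>* \<eta> (rotA u \<eta>')" by (rule less.IH[OF lt refl H H1 out1 m31])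
      show ?thesis by (rule rtranclp.rtrancl_into_rtrancl[of "Rb N", OF A R])
    qed
  qed
qed



lemma edge_const:
  assumes "ht \<eta> h" "ht \<eta>' h'" "\<eta> e = \<eta>' e"
  shows "h (tgt e) - h' (tgt e) = h (fst e) - h' (fst e)"
proof -
  have "h (tgt e) - h (fst e) = inc \<eta> e" "h' (tgt e) - h' (fst e) = inc \<eta>' e"
    using assms ht_alt by blast+
  then show ?thesis using assms(3) unfolding inc_def by auto
qed

lemma normalize:
  assumes H: "ht \<eta> h" and H': "ht \<eta>' h'" and ag: "\<And>e. fst e \<notin> Box N \<Longrightarrow> \<eta> e = \<eta>' e"
  shows "\<exists>c. \<forall>p. p \<notin> Box N \<longrightarrow> h p = h' p + c"
proof -
  define d where "d = (\<lambda>p. h p - h' p)"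
  have row: "d (x,y) = d (0,y)" if "\<bar>y\<bar> > N" for x y
  proof -
    have "d (k+1,y) = d (k,y)" for k
    proof -
      have "fst ((k,y),Ty1) \<notin> Box N" using that unfolding Box_def by auto
      then show ?thesis using edge_const[OF H H' ag, of "((k,y),Ty1)"] unfolding d_def by simp
    qed
    then show ?thesis using int_step_const[of "\<lambda>k. d (k,y)"] by blast
  qed
  have col: "d (x,y) = d (x,0)" if "\<bar>x\<bar> > N" for x y
  proof -
    have "d (x,k+1) = d (x,k)" for k
    proof -
      have "fst ((x,k),Ty2) \<notin> Box N" using that unfolding Box_def by auto
      then show ?thesis using edge_const[OF H H' ag, of "((x,k),Ty2)"] unfolding d_def by simp
    qed
    then show ?thesis using int_step_const[of "\<lambda>k. d (x,k)"] by blast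
  qed
  define K where "K = \<bar>N\<bar> + 1"
  have K: "\<bar>K\<bar> > N" unfolding K_def by auto
  have dK: "d p = d (K,K)" if "p \<notin> Box N" for p
  proof -
    obtain x y where p: "p = (x,y)" by (cases p)
    have "\<bar>x\<bar> > N \<or> \<bar>y\<bar> > N" using that unfolding p Box_def by auto
    then show ?thesis
    proof
      assume a: "\<bar>x\<bar> > N"
      have "d (x,y) = d (x,K)" using col[OF a, of y] col[OF a, of K] by simp
      also have "\<dots> = d (K,K)" using row[OF K, of x] row[OF K, of K] by simp
      finally show ?thesis unfolding p .
    next
      assume a: "\<bar>y\<bar> > N"
      have "d (x,y) = d (K,y)" using row[OF a, of x] row[OF a, of K] by simp
      also have "\<dots> = d (K,K)" using col[OF K, of y] col[OF K, of K] by simp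
      finally show ?thesis unfolding p .
    qed
  qed
  show ?thesis
  proof (intro exI[of _ "d (K,K)"] allI impI)
    fix p assume "p \<notin> Box N"
    then have "d p = d (K,K)" by (rule dK)
    then show "h p = h' p + d (K,K)" unfolding d_def by simp
  qed
qed

lemma mod3_global:
  assumes H: "ht \<eta> h" and H': "ht \<eta>' h'"
  shows "(h p - h' p) mod 3 = (h q - h' q) mod 3"
proof -
  define d where "d = (\<lambda>p. (h p - h' p) mod 3)"
  have E: "d (tgt e) = d (fst e)" for e
    using mod3_edge[OF H H', of e] unfolding d_def by (simp add: mod_eq_dvd_iff dvd_eq_mod_eq_0)
  have r: "d (x,y) = d (0,y)" for x y
  proof -
    have "d (k+1,y) = d (k,y)" for k using E[of "((k,y),Ty1)"] by simp
    then show ?thesis using int_step_const[of "\<lambda>k. d (k,y)"] by blast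
  qed
  have c: "d (x,y) = d (x,0)" for x y
  proof -
    have "d (x,k+1) = d (x,k)" for k using E[of "((x,k),Ty2)"] by simp
    then show ?thesis using int_step_const[of "\<lambda>k. d (x,k)"] by blast
  qed
  have "d p = d (0,0)" for p using r c by (cases p) metis
  then show ?thesis unfolding d_def by metis
qed

lemma conn_Omega:
  assumes "\<omega> \<in> Omega" "\<omega>' \<in> Omega" "\<And>e. fst e \<notin> Box N \<Longrightarrow> \<omega> e = \<omega>' e"
  shows "(Rb N)\<^sup>*\<^sup>* \<omega> \<omega>'"
proof -
  obtain h h0 where H: "ht \<omega> h" and H0: "ht \<omega>' h0" using Omega_ht[OF assms(1)] Omega_ht[OF assms(2)] by blast
  from normalize[OF H H0 assms(3)] obtain c where c: "\<forall>p. p \<notin> Box N \<longrightarrow> h p = h0 p + c" by blast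
  define h' where "h' = (\<lambda>u. h0 u + c)"
  have H': "ht \<omega>' h'" unfolding h'_def by (rule ht_shift[OF H0])
  have out: "\<forall>p. p \<notin> Box N \<longrightarrow> h p = h' p" using c unfolding h'_def by auto
  define K where "K = \<bar>N\<bar> + 1"
  have Kn: "(K,K) \<notin> Box N" unfolding K_def Box_def by auto
  have m3: "\<forall>p. (h p - h' p) mod 3 = 0"
    using mod3_global[OF H H', of _ "(K,K)"] out Kn by auto
  show ?thesis using conn_aux[OF refl H H' out m3] .
qed



lemma finite_ends: "finite (ends e)"
proof -
  obtain x y t where e: "e = ((x,y),t)" by (metis prod.collapse)
  show ?thesis unfolding e by (cases t) auto
qed

lemma finite_eat: "finite (eat v)"
  by (cases v) (auto simp: eat_def split: prod.splits)

lemma finite_bdry: assumes "finite \<Lambda>" shows "finite (bdry \<Lambda>)"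
proof -
  have "bdry \<Lambda> \<subseteq> (\<Union>e'\<in>\<Lambda>. \<Union>v\<in>ends e'. eat v)"
    unfolding bdry_def using ends_eat by blast
  moreover have "finite (\<Union>e'\<in>\<Lambda>. \<Union>v\<in>ends e'. eat v)"
    using assms finite_ends finite_eat by blast
  ultimately show ?thesis by (rule finite_subset)
qed

lemma restrict_restrict_sub: "B \<subseteq> A \<Longrightarrow> restrict (restrict f A) B = restrict f B"
  by (rule ext) (auto simp: restrict_def)

lemma bdry_disj: "bdry \<Lambda> \<inter> \<Lambda> = {}" unfolding bdry_def by auto

lemma restrict_eq_iff: "restrict \<omega> C = \<psi> \<longleftrightarrow> \<psi> \<in> extensional C \<and> (\<forall>e\<in>C. \<omega> e = \<psi> e)"
proof
  assume "restrict \<omega> C = \<psi>" then show "\<psi> \<in> extensional C \<and> (\<forall>e\<in>C. \<omega> e = \<psi> e)" by auto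
next
  assume A: "\<psi> \<in> extensional C \<and> (\<forall>e\<in>C. \<omega> e = \<psi> e)"
  show "restrict \<omega> C = \<psi>"
  proof
    fix e show "restrict \<omega> C e = \<psi> e" using A by (cases "e \<in> C") (auto simp: extensional_def)
  qed
qed

lemma cyl_sets:
  assumes "finite C" "\<And>e b. e \<in> C \<Longrightarrow> {\<omega>\<in>space M. \<omega> e = b} \<in> sets M"
  shows "{\<omega>\<in>space M. \<forall>e\<in>C. \<omega> e = \<beta> e} \<in> sets M"
  using assms
proof (induction C rule: finite_induct)
  case empty then show ?case by simp
next
  case (insert a C)
  have "{\<omega>\<in>space M. \<forall>e\<in>insert a C. \<omega> e = \<beta> e} =
        {\<omega>\<in>space M. \<omega> a = \<beta> a} \<inter> {\<omega>\<in>space M. \<forall>e\<in>C. \<omega> e = \<beta> e}" by auto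
  then show ?case using insert by auto
qed

lemma restr_sets:
  assumes "finite C" "\<And>e b. e \<in> C \<Longrightarrow> {\<omega>\<in>space M. \<omega> e = b} \<in> sets M"
  shows "{\<omega>\<in>space M. restrict \<omega> C = \<psi>} \<in> sets M"
proof (cases "\<psi> \<in> extensional C")
  case True
  then have "{\<omega>\<in>space M. restrict \<omega> C = \<psi>} = {\<omega>\<in>space M. \<forall>e\<in>C. \<omega> e = \<psi> e}"
    by (auto simp: restrict_eq_iff)
  then show ?thesis using cyl_sets[OF assms] by simp
next
  case False
  then have "{\<omega>\<in>space M. restrict \<omega> C = \<psi>} = {}" by (auto simp: restrict_eq_iff)
  then show ?thesis by (metis sets.empty_sets)
qed

lemma space_Omega_M: "space Omega_M = Omega"
  unfolding Omega_M_def by (simp add: space_restrict_space space_PiM)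

lemma glue_Omega:
  assumes "\<omega> \<in> Omega" "\<omega>' \<in> Omega" "\<forall>e\<in>bdry \<Lambda>. \<omega> e = \<omega>' e"
  shows "glue \<Lambda> (restrict \<omega>' \<Lambda>) \<omega> \<in> Omega"
  unfolding Omega_def
proof (rule CollectI, rule allI)
  fix v
  let ?g = "glue \<Lambda> (restrict \<omega>' \<Lambda>) \<omega>"
  show "\<exists>!e. ?g e \<and> v \<in> ends e"
  proof (cases "\<exists>e'\<in>\<Lambda>. v \<in> ends e'")
    case True
    have "?g e = \<omega>' e" if "v \<in> ends e" for e
    proof (cases "e \<in> \<Lambda>")
      case True then show ?thesis by (simp add: glue_def)
    next
      case False
      then have "e \<in> bdry \<Lambda>" using True that unfolding bdry_def by blast
      then show ?thesis using assms(3) False by (simp add: glue_def)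
    qed
    then have "(\<lambda>e. ?g e \<and> v \<in> ends e) = (\<lambda>e. \<omega>' e \<and> v \<in> ends e)" by auto
    then show ?thesis using assms(2) unfolding Omega_def by simp
  next
    case False
    then have "?g e = \<omega> e" if "v \<in> ends e" for e using that by (auto simp: glue_def)
    then have "(\<lambda>e. ?g e \<and> v \<in> ends e) = (\<lambda>e. \<omega> e \<and> v \<in> ends e)" by auto
    then show ?thesis using assms(1) unfolding Omega_def by simp
  qed
qed

lemma compat_out_bdry:
  assumes "\<omega> \<in> Omega"
  shows "compat_out \<Lambda> \<omega> = compat_bdry \<Lambda> (restrict \<omega> (bdry \<Lambda>))"
proof
  show "compat_out \<Lambda> \<omega> \<subseteq> compat_bdry \<Lambda> (restrict \<omega> (bdry \<Lambda>))"
  proof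
    fix \<xi> assume x: "\<xi> \<in> compat_out \<Lambda> \<omega>"
    then have xe: "\<xi> \<in> \<Lambda> \<rightarrow>\<^sub>E UNIV" and g: "glue \<Lambda> \<xi> \<omega> \<in> Omega" unfolding compat_out_def by auto
    have "restrict (glue \<Lambda> \<xi> \<omega>) \<Lambda> = \<xi>" using xe by (auto simp: PiE_iff restrict_eq_iff glue_def)
    moreover have "restrict (glue \<Lambda> \<xi> \<omega>) (bdry \<Lambda>) = restrict \<omega> (bdry \<Lambda>)"
      by (intro restrict_ext) (use bdry_disj[of \<Lambda>] in \<open>auto simp: glue_def\<close>)
    ultimately show "\<xi> \<in> compat_bdry \<Lambda> (restrict \<omega> (bdry \<Lambda>))"
      unfolding compat_bdry_def using xe g by blast
  qed
next
  show "compat_bdry \<Lambda> (restrict \<omega> (bdry \<Lambda>)) \<subseteq> compat_out \<Lambda> \<omega>"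
  proof
    fix \<xi> assume "\<xi> \<in> compat_bdry \<Lambda> (restrict \<omega> (bdry \<Lambda>))"
    then obtain \<omega>' where xe: "\<xi> \<in> \<Lambda> \<rightarrow>\<^sub>E UNIV" and o': "\<omega>' \<in> Omega" "restrict \<omega>' \<Lambda> = \<xi>"
      "restrict \<omega>' (bdry \<Lambda>) = restrict \<omega> (bdry \<Lambda>)" unfolding compat_bdry_def by blast
    have "\<forall>e\<in>bdry \<Lambda>. \<omega> e = \<omega>' e" using o'(3) by (metis restrict_apply')
    then have "glue \<Lambda> (restrict \<omega>' \<Lambda>) \<omega> \<in> Omega" using glue_Omega assms o'(1) by blast
    then show "\<xi> \<in> compat_out \<Lambda> \<omega>" unfolding compat_out_def using xe o'(2) by auto
  qed
qed

lemma rm_bound: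
  assumes "restricted_move \<Lambda> n kk kk'" "finite \<Lambda>"
  shows "n \<le> card \<Lambda>"
proof -
  obtain v fs where fs: "fs = faces_plus v n \<or> fs = faces_minus v n" and
    sub: "\<forall>u\<in>set fs. face_edges u \<subseteq> \<Lambda>" using assms unfolding restricted_move_def by blast
  have cs: "card (set fs) = n"
  proof -
    have i1: "inj_on (\<lambda>k::nat. (fst v - int k, snd v - int k)) A" for A by (auto intro!: inj_onI)
    have i2: "inj_on (\<lambda>k::nat. (fst v + int k, snd v + int k)) A" for A by (auto intro!: inj_onI)
    from fs show ?thesis
    proof
      assume "fs = faces_plus v n"
      then have "set fs = (\<lambda>k::nat. (fst v - int k, snd v - int k)) ` {1..<n+1}"
        unfolding faces_plus_def by (simp only: set_map set_upt)
      then show ?thesis using card_image[OF i1] by simp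
    next
      assume "fs = faces_minus v n"
      then have "set fs = (\<lambda>k::nat. (fst v + int k, snd v + int k)) ` {0..<n}"
        unfolding faces_minus_def by (simp only: set_map set_upt)
      then show ?thesis using card_image[OF i2] by simp
    qed
  qed
  have "b1 ` set fs \<subseteq> \<Lambda>" using sub unfolding face_edges_def tri1_def by auto
  moreover have "card (b1 ` set fs) = card (set fs)" by (rule card_image) (auto simp: inj_on_def b1_def)
  ultimately show ?thesis using cs card_mono[OF assms(2)] by metis
qed

lemma move_weight_pos:
  assumes "restricted_move \<Lambda> 1 kk kk'" "finite \<Lambda>"
  shows "move_weight \<Lambda> kk kk' \<ge> 1"
proof -
  have "{n. restricted_move \<Lambda> n kk kk'} \<subseteq> {..card \<Lambda>}"
    using rm_bound[OF _ assms(2), of _ kk kk'] by blast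
  then have fin: "finite {n. restricted_move \<Lambda> n kk kk'}" using finite_subset by blast
  have "(1::real) / real (1::nat) \<le> (\<Sum>n \<in> {n. restricted_move \<Lambda> n kk kk'}. 1 / real n)"
    by (rule member_le_sum) (use assms(1) fin in auto)
  then show ?thesis unfolding move_weight_def by simp
qed



lemma rot_unchanged: "rot u a = Some b \<Longrightarrow> e \<notin> face_edges u \<Longrightarrow> b e = a e"
  using rot_cases[of u a b] unfolding rotA_def rotB_def face_edges_def by auto

lemma rot_restrict:
  assumes "face_edges u \<subseteq> L" "rot u a = Some b"
  shows "rot u (restrict a L) = Some (restrict b L)"
proof -
  have t1: "tri1 u \<subseteq> L" and t2: "tri2 u \<subseteq> L" using assms(1) unfolding face_edges_def by auto
  from rot_cases[OF assms(2)] show ?thesis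
  proof
    assume A: "(\<forall>e\<in>tri1 u. a e) \<and> (\<forall>e\<in>tri2 u. \<not> a e) \<and> b = rotA u a"
    then have c1: "\<forall>e\<in>tri1 u. restrict a L e" and c2: "\<forall>e\<in>tri2 u. \<not> restrict a L e"
      using t1 t2 by auto
    have "rotA u (restrict a L) = restrict b L"
    proof
      fix e show "rotA u (restrict a L) e = restrict b L e"
        using A t1 t2 unfolding rotA_def by auto
    qed
    moreover from rotA_some[OF c1 c2] have "rot u (restrict a L) = Some (rotA u (restrict a L))" .
    ultimately show ?thesis by (simp only:)
  next
    assume A: "(\<forall>e\<in>tri2 u. a e) \<and> (\<forall>e\<in>tri1 u. \<not> a e) \<and> b = rotB u a"
    then have c1: "\<forall>e\<in>tri2 u. restrict a L e" and c2: "\<forall>e\<in>tri1 u. \<not> restrict a L e"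
      using t1 t2 by auto
    have ne: "\<not> (\<forall>e\<in>tri1 u. restrict a L e)" using c2 unfolding tri1_def by auto
    have "rotB u (restrict a L) = restrict b L"
    proof
      fix e show "rotB u (restrict a L) e = restrict b L e"
        using A t1 t2 unfolding rotB_def by auto
    qed
    then show ?thesis using c1 c2 ne unfolding rot_def rotB_def by auto
  qed
qed

lemma rm1:
  assumes "face_edges u \<subseteq> L" "rot u a = Some b"
  shows "restricted_move L 1 (restrict a L) (restrict b L)"
proof -
  have R: "rots [u] (restrict a L) = Some (restrict b L)" using rot_restrict[OF assms] by simp
  have t1: "tri1 u \<subseteq> L" and t2: "tri2 u \<subseteq> L" using assms(1) unfolding face_edges_def by auto
  from rot_cases[OF assms(2)] show ?thesis
  proof
    assume A: "(\<forall>e\<in>tri1 u. a e) \<and> (\<forall>e\<in>tri2 u. \<not> a e) \<and> b = rotA u a"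
    have "b3 u \<in> tri1 u" unfolding tri1_def by auto
    then have "restrict a L (b3 u)" using A t1 by auto
    moreover have "faces_minus u 1 = [u]" unfolding faces_minus_def by simp
    ultimately show ?thesis unfolding restricted_move_def using R assms(1)
      by (intro conjI exI[of _ u] exI[of _ "[u]"]) auto
  next
    assume A: "(\<forall>e\<in>tri2 u. a e) \<and> (\<forall>e\<in>tri1 u. \<not> a e) \<and> b = rotB u a"
    define v where "v = (fst u + 1, snd u + 1)"
    have "b3 v \<in> tri2 u" unfolding tri2_def v_def by auto
    then have "restrict a L (b3 v)" using A t2 by auto
    moreover have "faces_plus v 1 = [u]" unfolding faces_plus_def v_def by simp
    ultimately show ?thesis unfolding restricted_move_def using R assms(1)
      by (intro conjI exI[of _ v] exI[of _ "[u]"]) auto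
  qed
qed

definition FE :: "int \<Rightarrow> edge set" where "FE N = (\<Union>u\<in>Box N. face_edges u)"

context
  fixes \<nu> :: "config measure"
  assumes P: "prob_space \<nu>" and S: "sets \<nu> = sets Omega_M"
    and I0: "\<And>\<Lambda>. finite \<Lambda> \<Longrightarrow> I_fun \<Lambda> \<nu> = 0"
begin

lemma space_nu: "space \<nu> = Omega"
  using sets_eq_imp_space_eq[OF S] space_Omega_M by simp

lemma coord_sets: "{\<omega>\<in>space \<nu>. \<omega> e = b} \<in> sets \<nu>"
proof -
  have "(\<lambda>\<omega>. \<omega> e) \<in> measurable Omega_M (count_space UNIV)"
    unfolding Omega_M_def by (rule measurable_restrict_space1) (rule measurable_component_singleton, simp)
  then have m: "(\<lambda>\<omega>. \<omega> e) \<in> measurable \<nu> (count_space UNIV)"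
    using measurable_cong_sets[OF S refl] by blast
  have "(\<lambda>\<omega>. \<omega> e) -` {b} \<inter> space \<nu> \<in> sets \<nu>" using measurable_sets[OF m] by simp
  moreover have "(\<lambda>\<omega>. \<omega> e) -` {b} \<inter> space \<nu> = {\<omega>\<in>space \<nu>. \<omega> e = b}" by auto
  ultimately show ?thesis by simp
qed

lemma rsets: "finite C \<Longrightarrow> {\<omega>\<in>space \<nu>. restrict \<omega> C = \<psi>} \<in> sets \<nu>"
  by (rule restr_sets) (use coord_sets in auto)

lemma IZ:
  assumes fin: "finite L" and z: "\<zeta> \<in> bdry L \<rightarrow>\<^sub>E UNIV" and c: "kk \<in> compat_bdry L \<zeta>" "kk' \<in> compat_bdry L \<zeta>"
    and rm: "restricted_move L 1 kk kk'"
  shows "rprob \<nu> L kk \<zeta> = rprob \<nu> L kk' \<zeta>"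
proof -
  let ?t = "\<lambda>\<zeta> kk kk'. move_weight L kk kk' * (sqrt (rprob \<nu> L kk \<zeta>) - sqrt (rprob \<nu> L kk' \<zeta>))\<^sup>2"
  have mwn: "move_weight L a b \<ge> 0" for a b unfolding move_weight_def by (rule sum_nonneg) auto
  have tn: "?t z a b \<ge> 0" for z a b using mwn[of a b] by simp
  have fb: "finite (bdry L \<rightarrow>\<^sub>E (UNIV::bool set))" using finite_bdry[OF fin] by (intro finite_PiE) auto
  have fc: "finite (compat_bdry L z)" for z
  proof -
    have "finite (L \<rightarrow>\<^sub>E (UNIV::bool set))" using fin by (intro finite_PiE) auto
    then show ?thesis by (rule finite_subset[rotated]) (auto simp: compat_bdry_def)
  qed
  have "(\<Sum>\<zeta> \<in> bdry L \<rightarrow>\<^sub>E (UNIV :: bool set). \<Sum>kk \<in> compat_bdry L \<zeta>. \<Sum>kk' \<in> compat_bdry L \<zeta>. ?t \<zeta> kk kk') = 0"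
    using I0[OF fin] unfolding I_fun_def by simp
  then have "(\<Sum>kk \<in> compat_bdry L \<zeta>. \<Sum>kk' \<in> compat_bdry L \<zeta>. ?t \<zeta> kk kk') = 0"
    using z fb by (subst (asm) sum_nonneg_eq_0_iff) (auto intro!: sum_nonneg tn)
  then have "(\<Sum>kk' \<in> compat_bdry L \<zeta>. ?t \<zeta> kk kk') = 0"
    using c fc by (subst (asm) sum_nonneg_eq_0_iff) (auto intro!: sum_nonneg tn)
  then have "?t \<zeta> kk kk' = 0"
    using c fc by (subst (asm) sum_nonneg_eq_0_iff) (auto intro!: sum_nonneg tn)
  moreover have "move_weight L kk kk' \<ge> 1" by (rule move_weight_pos[OF rm fin])
  ultimately have "sqrt (rprob \<nu> L kk \<zeta>) = sqrt (rprob \<nu> L kk' \<zeta>)" by simp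
  then show ?thesis by simp
qed

lemma INV1:
  assumes fin: "finite L" and sub: "FE N \<subseteq> L" and a: "a \<in> Omega" and R: "Rb N a b"
  shows "b \<in> Omega \<and>
    measure \<nu> {\<omega>\<in>space \<nu>. restrict \<omega> L = restrict a L \<and> restrict \<omega> (bdry L) = restrict a (bdry L)} =
    measure \<nu> {\<omega>\<in>space \<nu>. restrict \<omega> L = restrict b L \<and> restrict \<omega> (bdry L) = restrict b (bdry L)}"
proof -
  obtain u where uB: "u \<in> Box N" and r: "rot u a = Some b" using R unfolding Rb_def by blast
  have fu: "face_edges u \<subseteq> L" using uB sub unfolding FE_def by auto
  have b: "b \<in> Omega" using rot_Omega[OF a r] .
  have bd: "restrict b (bdry L) = restrict a (bdry L)"
  proof
    fix e show "restrict b (bdry L) e = restrict a (bdry L) e"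
      using rot_unchanged[OF r, of e] fu bdry_disj[of L] by auto
  qed
  let ?z = "restrict a (bdry L)"
  have z: "?z \<in> bdry L \<rightarrow>\<^sub>E UNIV" by auto
  have ca: "restrict a L \<in> compat_bdry L ?z" unfolding compat_bdry_def using a by auto
  have cb: "restrict b L \<in> compat_bdry L ?z" unfolding compat_bdry_def using b bd by auto
  have "rprob \<nu> L (restrict a L) ?z = rprob \<nu> L (restrict b L) ?z"
    by (rule IZ[OF fin z ca cb rm1[OF fu r]])
  then show ?thesis using b bd unfolding rprob_def by simp
qed

lemma INV:
  assumes fin: "finite L" and sub: "FE N \<subseteq> L" and R: "(Rb N)\<^sup>*\<^sup>* a b" and a: "a \<in> Omega"
  shows "measure \<nu> {\<omega>\<in>space \<nu>. restrict \<omega> L = restrict a L \<and> restrict \<omega> (bdry L) = restrict a (bdry L)} =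
    measure \<nu> {\<omega>\<in>space \<nu>. restrict \<omega> L = restrict b L \<and> restrict \<omega> (bdry L) = restrict b (bdry L)}"
proof -
  have "b \<in> Omega \<and> ?thesis" using R
  proof (induction rule: rtranclp_induct)
    case base then show ?case using a by simp
  next
    case (step y z)
    from step.IH have yO: "y \<in> Omega" by blast
    have I1: "z \<in> Omega \<and> measure \<nu> {\<omega>\<in>space \<nu>. restrict \<omega> L = restrict y L \<and> restrict \<omega> (bdry L) = restrict y (bdry L)} =
    measure \<nu> {\<omega>\<in>space \<nu>. restrict \<omega> L = restrict z L \<and> restrict \<omega> (bdry L) = restrict z (bdry L)}"
      by (rule INV1[OF fin sub yO step(2)])
    show ?case using I1 step.IH by argo
  qed
  then show ?thesis by simp
qed

end


lemma restrict_eq_restrict: "restrict a A = restrict b A \<longleftrightarrow> (\<forall>e\<in>A. a e = b e)"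
  by (metis restrict_apply' restrict_ext)

definition phi :: "edge set \<Rightarrow> config \<Rightarrow> config \<Rightarrow> real" where
  "phi \<Lambda>0 \<xi> \<zeta> = (if \<xi> \<in> compat_bdry \<Lambda>0 \<zeta> then 1 / real (card (compat_bdry \<Lambda>0 \<zeta>)) else 0)"

context
  fixes \<nu> :: "config measure"
  assumes P: "prob_space \<nu>" and S: "sets \<nu> = sets Omega_M"
    and I0: "\<And>\<Lambda>. finite \<Lambda> \<Longrightarrow> I_fun \<Lambda> \<nu> = 0"
  fixes \<Lambda> L V :: "edge set" and N :: int
  assumes finL: "finite L" and LL: "\<Lambda> \<subseteq> L" and FL: "FE N \<subseteq> L"
    and VW: "V = (L \<union> bdry L) - \<Lambda>" and LB: "\<And>e. e \<in> \<Lambda> \<Longrightarrow> fst e \<in> Box N"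
begin

lemma sp: "space \<nu> = Omega" by (rule space_nu[OF P S I0])

lemma bdryV: "bdry \<Lambda> \<subseteq> V"
  using LL unfolding VW bdry_def by blast

lemma setW:
  assumes "\<omega> \<in> space \<nu>"
  shows "{\<omega>'\<in>space \<nu>. restrict \<omega>' L = restrict \<omega> L \<and> restrict \<omega>' (bdry L) = restrict \<omega> (bdry L)} =
    {\<omega>'\<in>space \<nu>. restrict \<omega>' V = restrict \<omega> V \<and> restrict \<omega>' \<Lambda> = restrict \<omega> \<Lambda>}"
  unfolding restrict_eq_restrict VW using LL by blast

lemma KL1:
  assumes w1: "\<omega>1 \<in> space \<nu>" "restrict \<omega>1 V = \<rho>" "restrict \<omega>1 \<Lambda> = \<xi>1"
    and c2: "\<xi>2 \<in> compat_bdry \<Lambda> (restrict \<omega>1 (bdry \<Lambda>))"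
  shows "measure \<nu> {\<omega>\<in>space \<nu>. restrict \<omega> V = \<rho> \<and> restrict \<omega> \<Lambda> = \<xi>1} =
         measure \<nu> {\<omega>\<in>space \<nu>. restrict \<omega> V = \<rho> \<and> restrict \<omega> \<Lambda> = \<xi>2}"
proof -
  have o1: "\<omega>1 \<in> Omega" using w1 sp by simp
  define \<omega>2 where "\<omega>2 = glue \<Lambda> \<xi>2 \<omega>1"
  have x2: "\<xi>2 \<in> compat_out \<Lambda> \<omega>1" using c2 compat_out_bdry[OF o1] by simp
  then have o2: "\<omega>2 \<in> Omega" and xe: "\<xi>2 \<in> \<Lambda> \<rightarrow>\<^sub>E UNIV" unfolding compat_out_def \<omega>2_def by auto
  have r2V: "restrict \<omega>2 V = \<rho>" using w1(2) unfolding \<omega>2_def VW by (auto simp: glue_def restrict_def)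
  have r2L: "restrict \<omega>2 \<Lambda> = \<xi>2" using xe unfolding \<omega>2_def by (auto simp: PiE_iff restrict_eq_iff glue_def)
  have ag: "\<omega>1 e = \<omega>2 e" if "fst e \<notin> Box N" for e
  proof -
    have "e \<notin> \<Lambda>" using LB[of e] that by blast
    then show ?thesis unfolding \<omega>2_def glue_def by simp
  qed
  have R: "(Rb N)\<^sup>*\<^sup>* \<omega>1 \<omega>2" by (rule conn_Omega[OF o1 o2 ag])
  have "measure \<nu> {\<omega>\<in>space \<nu>. restrict \<omega> L = restrict \<omega>1 L \<and> restrict \<omega> (bdry L) = restrict \<omega>1 (bdry L)} =
    measure \<nu> {\<omega>\<in>space \<nu>. restrict \<omega> L = restrict \<omega>2 L \<and> restrict \<omega> (bdry L) = restrict \<omega>2 (bdry L)}"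
    by (rule INV[OF P S I0 finL FL R o1])
  moreover have "\<omega>2 \<in> space \<nu>" using o2 sp by simp
  ultimately show ?thesis using setW[OF w1(1)] setW[of \<omega>2] w1 r2V r2L by simp
qed

lemma Yempty:
  assumes "\<xi>' \<notin> compat_bdry \<Lambda> (restrict \<rho> (bdry \<Lambda>))"
  shows "{\<omega>\<in>space \<nu>. restrict \<omega> V = \<rho> \<and> restrict \<omega> \<Lambda> = \<xi>'} = {}"
proof (rule ccontr)
  assume "{\<omega>\<in>space \<nu>. restrict \<omega> V = \<rho> \<and> restrict \<omega> \<Lambda> = \<xi>'} \<noteq> {}"
  then obtain \<omega> where w: "\<omega> \<in> space \<nu>" "restrict \<omega> V = \<rho>" "restrict \<omega> \<Lambda> = \<xi>'" by auto
  have "restrict \<rho> (bdry \<Lambda>) = restrict \<omega> (bdry \<Lambda>)" using w(2) restrict_restrict_sub[OF bdryV] by metis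
  then have "\<xi>' \<in> compat_bdry \<Lambda> (restrict \<rho> (bdry \<Lambda>))"
    unfolding compat_bdry_def using w sp by auto
  then show False using assms by simp
qed

lemma KL:
  assumes c1: "\<xi>1 \<in> compat_bdry \<Lambda> (restrict \<rho> (bdry \<Lambda>))"
    and c2: "\<xi>2 \<in> compat_bdry \<Lambda> (restrict \<rho> (bdry \<Lambda>))"
  shows "measure \<nu> {\<omega>\<in>space \<nu>. restrict \<omega> V = \<rho> \<and> restrict \<omega> \<Lambda> = \<xi>1} =
         measure \<nu> {\<omega>\<in>space \<nu>. restrict \<omega> V = \<rho> \<and> restrict \<omega> \<Lambda> = \<xi>2}"
proof -
  have rb: "restrict \<omega> (bdry \<Lambda>) = restrict \<rho> (bdry \<Lambda>)" if "restrict \<omega> V = \<rho>" for \<omega>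
    using that restrict_restrict_sub[OF bdryV] by metis
  show ?thesis
  proof (cases "{\<omega>\<in>space \<nu>. restrict \<omega> V = \<rho> \<and> restrict \<omega> \<Lambda> = \<xi>1} = {}")
    case False
    then obtain \<omega> where w: "\<omega> \<in> space \<nu>" "restrict \<omega> V = \<rho>" "restrict \<omega> \<Lambda> = \<xi>1" by auto
    show ?thesis by (rule KL1[OF w]) (use c2 rb[OF w(2)] in simp)
  next
    case True
    show ?thesis
    proof (cases "{\<omega>\<in>space \<nu>. restrict \<omega> V = \<rho> \<and> restrict \<omega> \<Lambda> = \<xi>2} = {}")
      case False
      then obtain \<omega> where w: "\<omega> \<in> space \<nu>" "restrict \<omega> V = \<rho>" "restrict \<omega> \<Lambda> = \<xi>2" by auto
      have "measure \<nu> {\<omega>\<in>space \<nu>. restrict \<omega> V = \<rho> \<and> restrict \<omega> \<Lambda> = \<xi>2} =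
         measure \<nu> {\<omega>\<in>space \<nu>. restrict \<omega> V = \<rho> \<and> restrict \<omega> \<Lambda> = \<xi>1}"
        by (rule KL1[OF w]) (use c1 rb[OF w(2)] in simp)
      then show ?thesis by simp
    next
      case F2: True
      show ?thesis by (subst True, subst F2, rule refl)
    qed
  qed
qed

lemma finLam: "finite \<Lambda>" using finL LL finite_subset by blast

lemma PR:
  "measure \<nu> {\<omega>\<in>space \<nu>. restrict \<omega> V = \<rho> \<and> restrict \<omega> \<Lambda> = \<xi>} =
   phi \<Lambda> \<xi> (restrict \<rho> (bdry \<Lambda>)) * measure \<nu> {\<omega>\<in>space \<nu>. restrict \<omega> V = \<rho>}"
proof -
  interpret prob_space \<nu> by (rule P)
  have finV: "finite V" unfolding VW using finL finite_bdry[OF finL] by auto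
  define Y where "Y = (\<lambda>\<xi>'. {\<omega>\<in>space \<nu>. restrict \<omega> V = \<rho> \<and> restrict \<omega> \<Lambda> = \<xi>'})"
  define K where "K = compat_bdry \<Lambda> (restrict \<rho> (bdry \<Lambda>))"
  have PE: "finite (\<Lambda> \<rightarrow>\<^sub>E (UNIV::bool set))" using finLam by (intro finite_PiE) auto
  have KPE: "K \<subseteq> \<Lambda> \<rightarrow>\<^sub>E UNIV" unfolding K_def compat_bdry_def by auto
  have Ymeas: "Y \<xi>' \<in> sets \<nu>" for \<xi>'
  proof -
    have "Y \<xi>' = {\<omega>\<in>space \<nu>. restrict \<omega> V = \<rho>} \<inter> {\<omega>\<in>space \<nu>. restrict \<omega> \<Lambda> = \<xi>'}"
      unfolding Y_def by auto
    then show ?thesis using rsets[OF P S I0 finV] rsets[OF P S I0 finLam] by auto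
  qed
  have EU: "{\<omega>\<in>space \<nu>. restrict \<omega> V = \<rho>} = (\<Union>\<xi>'\<in>\<Lambda> \<rightarrow>\<^sub>E UNIV. Y \<xi>')"
  proof (rule set_eqI, rule iffI)
    fix x assume x: "x \<in> {\<omega>\<in>space \<nu>. restrict \<omega> V = \<rho>}"
    have "restrict x \<Lambda> \<in> \<Lambda> \<rightarrow>\<^sub>E UNIV" by simp
    moreover have "x \<in> Y (restrict x \<Lambda>)" using x unfolding Y_def by simp
    ultimately show "x \<in> (\<Union>\<xi>'\<in>\<Lambda> \<rightarrow>\<^sub>E UNIV. Y \<xi>')" by blast
  next
    fix x assume "x \<in> (\<Union>\<xi>'\<in>\<Lambda> \<rightarrow>\<^sub>E UNIV. Y \<xi>')"
    then show "x \<in> {\<omega>\<in>space \<nu>. restrict \<omega> V = \<rho>}" unfolding Y_def by blast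
  qed
  have disj: "disjoint_family_on Y (\<Lambda> \<rightarrow>\<^sub>E UNIV)"
    unfolding disjoint_family_on_def Y_def by auto
  have "measure \<nu> {\<omega>\<in>space \<nu>. restrict \<omega> V = \<rho>} = (\<Sum>\<xi>'\<in>\<Lambda> \<rightarrow>\<^sub>E UNIV. measure \<nu> (Y \<xi>'))"
    unfolding EU by (rule finite_measure_finite_Union[OF PE _ disj]) (use Ymeas in auto)
  also have "\<dots> = (\<Sum>\<xi>'\<in>K. measure \<nu> (Y \<xi>'))"
  proof (rule sum.mono_neutral_right[OF PE KPE])
    show "\<forall>i\<in>(\<Lambda> \<rightarrow>\<^sub>E UNIV) - K. measure \<nu> (Y i) = 0"
    proof
      fix i assume "i \<in> (\<Lambda> \<rightarrow>\<^sub>E UNIV) - K"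
      then have "i \<notin> compat_bdry \<Lambda> (restrict \<rho> (bdry \<Lambda>))" unfolding K_def by blast
      then have "Y i = {}" unfolding Y_def by (rule Yempty)
      then show "measure \<nu> (Y i) = 0" by simp
    qed
  qed
  finally have EQ: "measure \<nu> {\<omega>\<in>space \<nu>. restrict \<omega> V = \<rho>} = (\<Sum>\<xi>'\<in>K. measure \<nu> (Y \<xi>'))" .
  show ?thesis
  proof (cases "\<xi> \<in> K")
    case True
    have "(\<Sum>\<xi>'\<in>K. measure \<nu> (Y \<xi>')) = (\<Sum>\<xi>'\<in>K. measure \<nu> (Y \<xi>))"
    proof (rule sum.cong[OF refl])
      fix \<xi>' assume "\<xi>' \<in> K"
      then have a: "\<xi>' \<in> compat_bdry \<Lambda> (restrict \<rho> (bdry \<Lambda>))" unfolding K_def .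
      have b: "\<xi> \<in> compat_bdry \<Lambda> (restrict \<rho> (bdry \<Lambda>))" using True unfolding K_def .
      show "measure \<nu> (Y \<xi>') = measure \<nu> (Y \<xi>)" unfolding Y_def by (rule KL[OF a b])
    qed
    also have "\<dots> = real (card K) * measure \<nu> (Y \<xi>)" by simp
    finally have E2: "measure \<nu> {\<omega>\<in>space \<nu>. restrict \<omega> V = \<rho>} = real (card K) * measure \<nu> (Y \<xi>)"
      using EQ by simp
    have "finite K" using PE KPE finite_subset by blast
    then have "card K > 0" using True card_gt_0_iff by blast
    then show ?thesis using E2 True unfolding phi_def Y_def K_def by simp
  next
    case False
    then have nk: "\<xi> \<notin> compat_bdry \<Lambda> (restrict \<rho> (bdry \<Lambda>))" unfolding K_def .
    have "Y \<xi> = {}" unfolding Y_def by (rule Yempty[OF nk])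
    then have m0: "measure \<nu> (Y \<xi>) = 0" by simp
    have "phi \<Lambda> \<xi> (restrict \<rho> (bdry \<Lambda>)) = 0" using nk unfolding phi_def by simp
    then show ?thesis using m0 unfolding Y_def by simp
  qed
qed

end


lemma finite_FE: "finite (FE N)"
  unfolding FE_def face_edges_def tri1_def tri2_def using finite_Box by auto

lemma exists_N: "finite \<Lambda> \<Longrightarrow> \<exists>N. \<forall>e\<in>\<Lambda>. fst e \<in> Box N"
proof -
  assume f: "finite \<Lambda>"
  define N where "N = (\<Sum>e\<in>\<Lambda>. \<bar>fst (fst e)\<bar> + \<bar>snd (fst e)\<bar>)"
  have "\<bar>fst (fst e)\<bar> + \<bar>snd (fst e)\<bar> \<le> N" if "e \<in> \<Lambda>" for e
    unfolding N_def by (rule member_le_sum) (use that f in auto)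
  then have "\<forall>e\<in>\<Lambda>. fst e \<in> Box N" unfolding Box_def by (force split: prod.splits)
  then show ?thesis by blast
qed

lemma sum_single:
  assumes "finite SS" "a \<in> SS"
  shows "(\<Sum>x\<in>SS. c x * (if x = a then 1 else 0)) = (c a :: real)"
proof -
  have "(\<Sum>x\<in>SS. c x * (if x = a then 1 else 0)) = (\<Sum>x\<in>SS. if x = a then c x else 0)"
    by (rule sum.cong) auto
  also have "\<dots> = c a" using assms by (simp add: sum.delta)
  finally show ?thesis .
qed

context
  fixes \<nu> :: "config measure"
  assumes P: "prob_space \<nu>" and S: "sets \<nu> = sets Omega_M"
    and I0: "\<And>\<Lambda>. finite \<Lambda> \<Longrightarrow> I_fun \<Lambda> \<nu> = 0"
begin

lemma basic:
  assumes fL: "finite \<Lambda>" and fC: "finite C" and CL: "C \<inter> \<Lambda> = {}"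
  shows "(\<integral>\<omega>. indicator {\<omega>\<in>space \<nu>. \<forall>e\<in>C. \<omega> e = \<beta> e} \<omega> * indicator {\<omega>\<in>space \<nu>. restrict \<omega> \<Lambda> = \<xi>} \<omega> \<partial>\<nu>)
       = (\<integral>\<omega>. indicator {\<omega>\<in>space \<nu>. \<forall>e\<in>C. \<omega> e = \<beta> e} \<omega> * phi \<Lambda> \<xi> (restrict \<omega> (bdry \<Lambda>)) \<partial>\<nu>)"
proof -
  interpret prob_space \<nu> by (rule P)
  obtain N where LB: "\<forall>e\<in>\<Lambda>. fst e \<in> Box N" using exists_N[OF fL] by blast
  define L where "L = \<Lambda> \<union> C \<union> FE N"
  have finL: "finite L" unfolding L_def using fL fC finite_FE by auto
  define V where "V = (L \<union> bdry L) - \<Lambda>"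
  have finV: "finite V" unfolding V_def using finL finite_bdry[OF finL] by auto
  have CV: "C \<subseteq> V" unfolding V_def L_def using CL by auto
  have BV: "bdry \<Lambda> \<subseteq> V" unfolding V_def L_def bdry_def by blast
  define A where "A = {\<omega>\<in>space \<nu>. \<forall>e\<in>C. \<omega> e = \<beta> e}"
  define X where "X = {\<omega>\<in>space \<nu>. restrict \<omega> \<Lambda> = \<xi>}"
  define E where "E = (\<lambda>\<rho>. {\<omega>\<in>space \<nu>. restrict \<omega> V = \<rho>})"
  define Y where "Y = (\<lambda>\<rho>. {\<omega>\<in>space \<nu>. restrict \<omega> V = \<rho> \<and> restrict \<omega> \<Lambda> = \<xi>})"
  define cA where "cA = (\<lambda>\<rho>. if \<forall>e\<in>C. \<rho> e = \<beta> e then 1 else (0::real))"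
  define PV where "PV = V \<rightarrow>\<^sub>E (UNIV::bool set)"
  have finPV: "finite PV" unfolding PV_def using finV by (intro finite_PiE) auto
  have emf: "emeasure \<nu> B < \<infinity>" for B using emeasure_finite[of B] by (simp add: less_top[symmetric])
  have Emeas: "E \<rho> \<in> sets \<nu>" for \<rho> unfolding E_def by (rule rsets[OF P S I0 finV])
  have Ymeas: "Y \<rho> \<in> sets \<nu>" for \<rho>
  proof -
    have "Y \<rho> = E \<rho> \<inter> {\<omega>\<in>space \<nu>. restrict \<omega> \<Lambda> = \<xi>}" unfolding Y_def E_def by auto
    then show ?thesis using Emeas rsets[OF P S I0 fL] by auto
  qed
  have intY: "integrable \<nu> (indicator (Y \<rho>) :: config \<Rightarrow> real)" for \<rho>
    using Ymeas emf by (intro integrable_real_indicator)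
  have intE: "integrable \<nu> (indicator (E \<rho>) :: config \<Rightarrow> real)" for \<rho>
    using Emeas emf by (intro integrable_real_indicator)
  have id1: "indicator A \<omega> * indicator X \<omega> = (\<Sum>\<rho>\<in>PV. cA \<rho> * indicator (Y \<rho>) \<omega>)"
    if w: "\<omega> \<in> space \<nu>" for \<omega>
  proof -
    let ?r = "restrict \<omega> V"
    have "indicator (Y \<rho>) \<omega> = indicator X \<omega> * (if \<rho> = ?r then 1 else (0::real))" for \<rho>
      using w unfolding Y_def X_def by (auto simp: indicator_def)
    then have "(\<Sum>\<rho>\<in>PV. cA \<rho> * indicator (Y \<rho>) \<omega>) = (\<Sum>\<rho>\<in>PV. (cA \<rho> * indicator X \<omega>) * (if \<rho> = ?r then 1 else 0))"
      by (simp add: mult.assoc)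
    also have "\<dots> = cA ?r * indicator X \<omega>" by (rule sum_single[OF finPV]) (auto simp: PV_def)
    also have "cA ?r = indicator A \<omega>" using CV w unfolding cA_def A_def by (auto simp: indicator_def)
    finally show ?thesis by simp
  qed
  have id2: "indicator A \<omega> * phi \<Lambda> \<xi> (restrict \<omega> (bdry \<Lambda>)) =
     (\<Sum>\<rho>\<in>PV. (cA \<rho> * phi \<Lambda> \<xi> (restrict \<rho> (bdry \<Lambda>))) * indicator (E \<rho>) \<omega>)"
    if w: "\<omega> \<in> space \<nu>" for \<omega>
  proof -
    let ?r = "restrict \<omega> V"
    have "indicator (E \<rho>) \<omega> = (if \<rho> = ?r then 1 else (0::real))" for \<rho>
      using w unfolding E_def by (auto simp: indicator_def)
    then have "(\<Sum>\<rho>\<in>PV. (cA \<rho> * phi \<Lambda> \<xi> (restrict \<rho> (bdry \<Lambda>))) * indicator (E \<rho>) \<omega>) =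
       (\<Sum>\<rho>\<in>PV. (cA \<rho> * phi \<Lambda> \<xi> (restrict \<rho> (bdry \<Lambda>))) * (if \<rho> = ?r then 1 else 0))"
      by simp
    also have "\<dots> = cA ?r * phi \<Lambda> \<xi> (restrict ?r (bdry \<Lambda>))" by (rule sum_single[OF finPV]) (auto simp: PV_def)
    also have "cA ?r = indicator A \<omega>" using CV w unfolding cA_def A_def by (auto simp: indicator_def)
    also have "restrict ?r (bdry \<Lambda>) = restrict \<omega> (bdry \<Lambda>)" by (rule restrict_restrict_sub[OF BV])
    finally show ?thesis by (rule sym)
  qed
  have "(\<integral>\<omega>. indicator A \<omega> * indicator X \<omega> \<partial>\<nu>) = (\<integral>\<omega>. (\<Sum>\<rho>\<in>PV. cA \<rho> * indicator (Y \<rho>) \<omega>) \<partial>\<nu>)"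
    by (rule Bochner_Integration.integral_cong[OF refl]) (rule id1)
  also have "\<dots> = (\<Sum>\<rho>\<in>PV. cA \<rho> * measure \<nu> (Y \<rho>))"
    using Ymeas by (subst Bochner_Integration.integral_sum) (auto simp: Int_absorb2 sets.sets_into_space emf intY intE)
  also have "\<dots> = (\<Sum>\<rho>\<in>PV. (cA \<rho> * phi \<Lambda> \<xi> (restrict \<rho> (bdry \<Lambda>))) * measure \<nu> (E \<rho>))"
  proof (rule sum.cong[OF refl])
    fix \<rho>
    have "measure \<nu> (Y \<rho>) = phi \<Lambda> \<xi> (restrict \<rho> (bdry \<Lambda>)) * measure \<nu> (E \<rho>)"
      unfolding Y_def E_def
      by (rule PR[OF P S I0 finL _ _ V_def]) (use LB in \<open>auto simp: L_def\<close>)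
    then show "cA \<rho> * measure \<nu> (Y \<rho>) = (cA \<rho> * phi \<Lambda> \<xi> (restrict \<rho> (bdry \<Lambda>))) * measure \<nu> (E \<rho>)"
      by simp
  qed
  also have "\<dots> = (\<integral>\<omega>. (\<Sum>\<rho>\<in>PV. (cA \<rho> * phi \<Lambda> \<xi> (restrict \<rho> (bdry \<Lambda>))) * indicator (E \<rho>) \<omega>) \<partial>\<nu>)"
    using Emeas by (subst Bochner_Integration.integral_sum) (auto simp: Int_absorb2 sets.sets_into_space emf intY intE)
  also have "\<dots> = (\<integral>\<omega>. indicator A \<omega> * phi \<Lambda> \<xi> (restrict \<omega> (bdry \<Lambda>)) \<partial>\<nu>)"
    by (rule Bochner_Integration.integral_cong[OF refl]) (rule id2[symmetric])
  finally show ?thesis unfolding A_def X_def .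
qed

end


lemma phi_bounds: "0 \<le> phi \<Lambda> \<xi> \<zeta> \<and> phi \<Lambda> \<xi> \<zeta> \<le> 1"
proof -
  have "0 \<le> 1 / real n \<and> 1 / real n \<le> (1::real)" for n :: nat
    by (cases n) (auto simp: divide_simps)
  then show ?thesis unfolding phi_def by auto
qed

context
  fixes \<nu> :: "config measure"
  assumes P: "prob_space \<nu>" and S: "sets \<nu> = sets Omega_M"
    and I0: "\<And>\<Lambda>. finite \<Lambda> \<Longrightarrow> I_fun \<Lambda> \<nu> = 0"
  fixes \<Lambda> :: "edge set" and \<xi> :: config
  assumes fL: "finite \<Lambda>"
begin

definition "GG = {{\<omega>\<in>space \<nu>. \<omega> e} | e. e \<notin> \<Lambda>}"

lemma GG_Pow: "GG \<subseteq> Pow (space \<nu>)" unfolding GG_def by auto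

lemma sp_F: "space (outside_alg \<nu> \<Lambda>) = space \<nu>"
  unfolding outside_alg_def using GG_Pow unfolding GG_def by (simp add: space_measure_of)

lemma sets_F: "sets (outside_alg \<nu> \<Lambda>) = sigma_sets (space \<nu>) GG"
  unfolding outside_alg_def using GG_Pow unfolding GG_def by (simp add: sets_measure_of)

lemma coord_F: "e \<notin> \<Lambda> \<Longrightarrow> {\<omega>\<in>space (outside_alg \<nu> \<Lambda>). \<omega> e = b} \<in> sets (outside_alg \<nu> \<Lambda>)"
proof -
  assume e: "e \<notin> \<Lambda>"
  have g: "{\<omega>\<in>space \<nu>. \<omega> e} \<in> sigma_sets (space \<nu>) GG" unfolding GG_def using e
    by (intro sigma_sets.Basic) blast
  show ?thesis
  proof (cases b)
    case True
    then show ?thesis using g unfolding sp_F sets_F by simp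
  next
    case False
    have "space \<nu> - {\<omega>\<in>space \<nu>. \<omega> e} \<in> sigma_sets (space \<nu>) GG" using g by (rule sigma_sets.Compl)
    moreover have "space \<nu> - {\<omega>\<in>space \<nu>. \<omega> e} = {\<omega>\<in>space \<nu>. \<omega> e = b}" using False by auto
    ultimately show ?thesis unfolding sp_F sets_F by simp
  qed
qed

lemma subalg: "subalgebra \<nu> (outside_alg \<nu> \<Lambda>)"
proof -
  have "GG \<subseteq> sets \<nu>" unfolding GG_def using coord_sets[OF P S I0, of _ True] by auto
  then have "sigma_sets (space \<nu>) GG \<subseteq> sets \<nu>" by (rule sets.sigma_sets_subset)
  then show ?thesis unfolding subalgebra_def sp_F sets_F by simp
qed

definition "GC = {{\<omega>\<in>space \<nu>. \<forall>e\<in>C. \<omega> e = \<beta> e} | C \<beta>. finite C \<and> C \<inter> \<Lambda> = {}} \<union> {{}}"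

lemma GC_Pow: "GC \<subseteq> Pow (space \<nu>)" unfolding GC_def by auto

lemma GC_sigma: "sigma_sets (space \<nu>) GC = sigma_sets (space \<nu>) GG"
proof (rule sigma_sets_eqI)
  fix a assume "a \<in> GC"
  then show "a \<in> sigma_sets (space \<nu>) GG"
  proof (cases "a = {}")
    case True then show ?thesis by (simp add: sigma_sets.Empty)
  next
    case False
    with \<open>a \<in> GC\<close> obtain C \<beta> where a: "a = {\<omega>\<in>space \<nu>. \<forall>e\<in>C. \<omega> e = \<beta> e}" and
      C: "finite C" "C \<inter> \<Lambda> = {}" unfolding GC_def by blast
    have "{\<omega>\<in>space (outside_alg \<nu> \<Lambda>). \<forall>e\<in>C. \<omega> e = \<beta> e} \<in> sets (outside_alg \<nu> \<Lambda>)"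
      by (rule cyl_sets[OF C(1)]) (use coord_F C(2) in blast)
    then show ?thesis unfolding a sp_F sets_F .
  qed
next
  fix b assume "b \<in> GG"
  then obtain e where b: "b = {\<omega>\<in>space \<nu>. \<omega> e}" and e: "e \<notin> \<Lambda>" unfolding GG_def by blast
  have bb: "b = {\<omega>\<in>space \<nu>. \<forall>e'\<in>{e}. \<omega> e' = (\<lambda>_. True) e'}" unfolding b by auto
  have "b \<in> GC" unfolding GC_def
    by (intro UnI1 CollectI exI[of _ "{e}"] exI[of _ "\<lambda>_. True"] conjI bb) (use e in auto)
  then show "b \<in> sigma_sets (space \<nu>) GC" by (rule sigma_sets.Basic)
qed

lemma GC_Int: "Int_stable GC"
  unfolding Int_stable_def
proof (intro ballI)
  fix a b assume a: "a \<in> GC" and b: "b \<in> GC"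
  show "a \<inter> b \<in> GC"
  proof (cases "a = {} \<or> b = {}")
    case True then show ?thesis unfolding GC_def by auto
  next
    case False
    with a obtain C1 \<beta>1 where a': "a = {\<omega>\<in>space \<nu>. \<forall>e\<in>C1. \<omega> e = \<beta>1 e}" and
      C1: "finite C1" "C1 \<inter> \<Lambda> = {}" unfolding GC_def by blast
    from False b obtain C2 \<beta>2 where b': "b = {\<omega>\<in>space \<nu>. \<forall>e\<in>C2. \<omega> e = \<beta>2 e}" and
      C2: "finite C2" "C2 \<inter> \<Lambda> = {}" unfolding GC_def by blast
    show ?thesis
    proof (cases "\<forall>e\<in>C1 \<inter> C2. \<beta>1 e = \<beta>2 e")
      case True
      define \<gamma> where "\<gamma> = (\<lambda>e. if e \<in> C1 then \<beta>1 e else \<beta>2 e)"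
      have "a \<inter> b = {\<omega>\<in>space \<nu>. \<forall>e\<in>C1 \<union> C2. \<omega> e = \<gamma> e}"
        unfolding a' b' \<gamma>_def using True by auto
      moreover have "finite (C1 \<union> C2)" "(C1 \<union> C2) \<inter> \<Lambda> = {}" using C1 C2 by auto
      ultimately show ?thesis unfolding GC_def by blast
    next
      case F2: False
      then have "a \<inter> b = {}" unfolding a' b' by auto
      then show ?thesis unfolding GC_def by auto
    qed
  qed
qed

abbreviation "gg \<equiv> (\<lambda>\<omega>. phi \<Lambda> \<xi> (restrict \<omega> (bdry \<Lambda>)))"
abbreviation "XX \<equiv> {\<omega>\<in>space \<nu>. restrict \<omega> \<Lambda> = \<xi>}"

lemma gg_meas_F: "gg \<in> borel_measurable (outside_alg \<nu> \<Lambda>)"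
proof -
  let ?F = "outside_alg \<nu> \<Lambda>"
  let ?Z = "bdry \<Lambda> \<rightarrow>\<^sub>E (UNIV::bool set)"
  have fb: "finite (bdry \<Lambda>)" by (rule finite_bdry[OF fL])
  have fZ: "finite ?Z" using fb by (intro finite_PiE) auto
  have Zs: "{\<omega>\<in>space ?F. restrict \<omega> (bdry \<Lambda>) = \<zeta>} \<in> sets ?F" for \<zeta>
    by (rule restr_sets[OF fb]) (use coord_F bdry_disj[of \<Lambda>] in blast)
  have eq: "gg \<omega> = (\<Sum>\<zeta>\<in>?Z. phi \<Lambda> \<xi> \<zeta> * indicator {\<omega>\<in>space ?F. restrict \<omega> (bdry \<Lambda>) = \<zeta>} \<omega>)"
    if w: "\<omega> \<in> space ?F" for \<omega>
  proof -
    have "indicator {\<omega>\<in>space ?F. restrict \<omega> (bdry \<Lambda>) = \<zeta>} \<omega> =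
      (if \<zeta> = restrict \<omega> (bdry \<Lambda>) then 1 else (0::real))" for \<zeta>
      using w by (auto simp: indicator_def)
    then have "(\<Sum>\<zeta>\<in>?Z. phi \<Lambda> \<xi> \<zeta> * indicator {\<omega>\<in>space ?F. restrict \<omega> (bdry \<Lambda>) = \<zeta>} \<omega>) =
       (\<Sum>\<zeta>\<in>?Z. phi \<Lambda> \<xi> \<zeta> * (if \<zeta> = restrict \<omega> (bdry \<Lambda>) then 1 else 0))" by simp
    also have "\<dots> = gg \<omega>" by (rule sum_single[OF fZ]) auto
    finally show ?thesis by simp
  qed
  have "(\<lambda>\<omega>. \<Sum>\<zeta>\<in>?Z. phi \<Lambda> \<xi> \<zeta> * indicator {\<omega>\<in>space ?F. restrict \<omega> (bdry \<Lambda>) = \<zeta>} \<omega>) \<in> borel_measurable ?F"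
    using Zs by (intro borel_measurable_sum borel_measurable_times borel_measurable_const borel_measurable_indicator)
  then show ?thesis using eq measurable_cong by (metis (no_types, lifting))
qed

lemma gg_meas: "gg \<in> borel_measurable \<nu>"
  by (rule measurable_from_subalg[OF subalg gg_meas_F])

lemma XX_meas: "XX \<in> sets \<nu>" by (rule rsets[OF P S I0 fL])

lemma conv:
  assumes m: "g \<in> borel_measurable \<nu>" and b: "\<And>x. 0 \<le> g x \<and> g x \<le> 1" and A: "A \<in> sets \<nu>"
  shows "emeasure (density \<nu> (\<lambda>x. ennreal (g x))) A = ennreal (\<integral>x. indicator A x * g x \<partial>\<nu>)"
proof -
  interpret prob_space \<nu> by (rule P)
  have "emeasure (density \<nu> (\<lambda>x. ennreal (g x))) A = (\<integral>\<^sup>+ x. ennreal (g x) * indicator A x \<partial>\<nu>)"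
    using m A by (intro emeasure_density) auto
  also have "\<dots> = (\<integral>\<^sup>+ x. ennreal (indicator A x * g x) \<partial>\<nu>)"
    by (rule nn_integral_cong) (auto simp: indicator_def)
  also have "\<dots> = ennreal (\<integral>x. indicator A x * g x \<partial>\<nu>)"
  proof (rule nn_integral_eq_integral)
    show "integrable \<nu> (\<lambda>x. indicator A x * g x)"
    proof (rule integrable_const_bound[where B=1])
      show "AE x in \<nu>. norm (indicator A x * g x) \<le> 1" using b by (auto simp: indicator_def)
      show "(\<lambda>x. indicator A x * g x) \<in> borel_measurable \<nu>" using m A by measurable
    qed
    show "AE x in \<nu>. 0 \<le> indicator A x * g x" using b by (auto simp: indicator_def)
  qed
  finally show ?thesis .
qed

lemma main_eq:
  assumes A: "A \<in> sets (outside_alg \<nu> \<Lambda>)"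
  shows "(\<integral>x. indicator A x * indicator XX x \<partial>\<nu>) = (\<integral>x. indicator A x * gg x \<partial>\<nu>)"
proof -
  interpret prob_space \<nu> by (rule P)
  let ?D1 = "density \<nu> (\<lambda>x. ennreal (indicator XX x))"
  let ?D2 = "density \<nu> (\<lambda>x. ennreal (gg x))"
  have m1: "(indicator XX :: config \<Rightarrow> real) \<in> borel_measurable \<nu>" using XX_meas by measurable
  have b1: "0 \<le> (indicator XX x :: real) \<and> indicator XX x \<le> (1::real)" for x by (auto simp: indicator_def)
  have b2: "0 \<le> gg x \<and> gg x \<le> 1" for x by (rule phi_bounds)
  have sub: "sigma_sets (space \<nu>) GC \<subseteq> sets \<nu>"
    using subalg unfolding subalgebra_def sets_F GC_sigma by simp
  have c1: "emeasure ?D1 B = ennreal (\<integral>x. indicator B x * indicator XX x \<partial>\<nu>)" if "B \<in> sets \<nu>" for B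
    by (rule conv[OF m1 b1 that])
  have c2: "emeasure ?D2 B = ennreal (\<integral>x. indicator B x * gg x \<partial>\<nu>)" if "B \<in> sets \<nu>" for B
    by (rule conv[OF gg_meas b2 that])
  have basicP: "emeasure ?D1 B = emeasure ?D2 B" if "B \<in> GC" for B
  proof (cases "B = {}")
    case True then show ?thesis by simp
  next
    case False
    with that obtain C \<beta> where B: "B = {\<omega>\<in>space \<nu>. \<forall>e\<in>C. \<omega> e = \<beta> e}" and
      C: "finite C" "C \<inter> \<Lambda> = {}" unfolding GC_def by blast
    have Bm: "B \<in> sets \<nu>" unfolding B by (rule cyl_sets[OF C(1)]) (use coord_sets[OF P S I0] in blast)
    have "(\<integral>x. indicator B x * indicator XX x \<partial>\<nu>) = (\<integral>x. indicator B x * gg x \<partial>\<nu>)"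
      unfolding B by (rule basic[OF P S I0 fL C])
    then show ?thesis using c1[OF Bm] c2[OF Bm] by simp
  qed
  have AG: "A \<in> sigma_sets (space \<nu>) GC" using A unfolding sets_F GC_sigma .
  have "emeasure ?D1 A = emeasure ?D2 A"
    using GC_Int GC_Pow AG
  proof (induction rule: sigma_sets_induct_disjoint)
    case (basic A) then show ?case by (rule basicP)
  next
    case empty then show ?case by simp
  next
    case (compl A)
    have Am: "A \<in> sets \<nu>" using compl(1) sub by auto
    have sp: "space \<nu> \<in> GC" unfolding GC_def by (intro UnI1 CollectI exI[of _ "{}"]) auto
    have fin1: "emeasure ?D1 A \<noteq> \<infinity>" using c1[OF Am] by simp
    have fin2: "emeasure ?D2 A \<noteq> \<infinity>" using c2[OF Am] by simp
    have "emeasure ?D1 (space \<nu> - A) = emeasure ?D1 (space \<nu>) - emeasure ?D1 A"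
      using emeasure_compl[of A ?D1] Am fin1 by simp
    also have "\<dots> = emeasure ?D2 (space \<nu>) - emeasure ?D2 A" by (subst basicP[OF sp], subst compl(2), rule refl)
    also have "\<dots> = emeasure ?D2 (space \<nu> - A)"
      using emeasure_compl[of A ?D2] Am fin2 by simp
    finally show ?case .
  next
    case (union A)
    have Am: "range A \<subseteq> sets \<nu>" using union(2) sub by auto
    have "emeasure ?D1 (\<Union>i. A i) = (\<Sum>i. emeasure ?D1 (A i))"
      using suminf_emeasure[of A ?D1] Am union(1) by simp
    also have "\<dots> = (\<Sum>i. emeasure ?D2 (A i))" by (rule suminf_cong) (rule union(3))
    also have "\<dots> = emeasure ?D2 (\<Union>i. A i)"
      using suminf_emeasure[of A ?D2] Am union(1) by simp
    finally show ?case .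
  qed
  moreover have Am: "A \<in> sets \<nu>" using AG sub by auto
  ultimately have "ennreal (\<integral>x. indicator A x * indicator XX x \<partial>\<nu>) = ennreal (\<integral>x. indicator A x * gg x \<partial>\<nu>)"
    using c1[OF Am] c2[OF Am] by simp
  moreover have "(\<integral>x. indicator A x * indicator XX x \<partial>\<nu>) \<ge> (0::real)"
    by (rule Bochner_Integration.integral_nonneg_AE) (auto simp: indicator_def)
  moreover have "(\<integral>x. indicator A x * gg x \<partial>\<nu>) \<ge> 0"
    by (rule Bochner_Integration.integral_nonneg_AE) (use b2 in \<open>auto simp: indicator_def\<close>)
  ultimately show ?thesis by simp
qed

lemma cond_main:
  "AE \<omega> in \<nu>. real_cond_exp \<nu> (outside_alg \<nu> \<Lambda>) (indicator XX) \<omega>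
     = (if \<xi> \<in> compat_out \<Lambda> \<omega> then 1 / real (card (compat_out \<Lambda> \<omega>)) else 0)"
proof -
  interpret prob_space \<nu> by (rule P)
  interpret finite_measure_subalgebra \<nu> "outside_alg \<nu> \<Lambda>"
    by unfold_locales (rule subalg)
  have emf: "emeasure \<nu> B < \<infinity>" for B using emeasure_finite[of B] by (simp add: less_top[symmetric])
  have h1: "(\<integral>x\<in>A. indicator XX x \<partial>\<nu>) = (\<integral>x\<in>A. gg x \<partial>\<nu>)"
    if "A \<in> sets (outside_alg \<nu> \<Lambda>)" for A
    using main_eq[OF that] by (simp add: set_lebesgue_integral_def)
  have h2: "integrable \<nu> (indicator XX :: config \<Rightarrow> real)" using XX_meas emf by (intro integrable_real_indicator)
  have h3: "integrable \<nu> gg"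
  proof (rule integrable_const_bound[where B=1])
    show "AE x in \<nu>. norm (gg x) \<le> 1" using phi_bounds by (auto intro!: AE_I2 simp: abs_le_iff)
    show "gg \<in> borel_measurable \<nu>" by (rule gg_meas)
  qed
  have h4: "gg \<in> borel_measurable (outside_alg \<nu> \<Lambda>)" by (rule gg_meas_F)
  have ae: "AE \<omega> in \<nu>. real_cond_exp \<nu> (outside_alg \<nu> \<Lambda>) (indicator XX) \<omega> = gg \<omega>"
    by (rule real_cond_exp_charact[OF h1 h2 h3 h4])
  have "AE \<omega> in \<nu>. gg \<omega> = (if \<xi> \<in> compat_out \<Lambda> \<omega> then 1 / real (card (compat_out \<Lambda> \<omega>)) else 0)"
  proof (rule AE_I2)
    fix \<omega> assume "\<omega> \<in> space \<nu>"
    then have "\<omega> \<in> Omega" using space_nu[OF P S I0] by simp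
    then show "gg \<omega> = (if \<xi> \<in> compat_out \<Lambda> \<omega> then 1 / real (card (compat_out \<Lambda> \<omega>)) else 0)"
      using compat_out_bdry[of \<omega> \<Lambda>] unfolding phi_def by simp
  qed
  with ae show ?thesis by eventually_elim simp
qed

end


theorem lemma6:
  fixes \<nu> :: "config measure"
  assumes "prob_space \<nu>"
    and "sets \<nu> = sets Omega_M"
    and "\<And>\<Lambda>. finite \<Lambda> \<Longrightarrow> I_fun \<Lambda> \<nu> = 0"
  shows "gibbs \<nu>"
  unfolding gibbs_def
proof (intro conjI allI impI ballI)
  show "prob_space \<nu>" by (rule assms(1))
  show "sets \<nu> = sets Omega_M" by (rule assms(2))
  fix \<Lambda> :: "edge set" and \<xi> :: config
  assume "finite \<Lambda>"
  show "AE \<omega> in \<nu>. real_cond_exp \<nu> (outside_alg \<nu> \<Lambda>)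
                     (indicator {\<omega>' \<in> space \<nu>. restrict \<omega>' \<Lambda> = \<xi>}) \<omega>
                 = (if \<xi> \<in> compat_out \<Lambda> \<omega> then 1 / real (card (compat_out \<Lambda> \<omega>)) else 0)"
    by (rule cond_main[OF assms(1) assms(2) assms(3) \<open>finite \<Lambda>\<close>])
qed

end
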